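(* In a finite dynamic game as described in the context, suppose $K^i$ is unilaterally sufficient information for player $i$, and let $g^{-i}$ be a fully mixed behavioral strategy profile of the players other than $i$. For $\tau\in\mathcal{T}$ define $$Q_\tau^i(h_\tau^i,u_\tau^i)=\mathbb{E}^{g^{-i}}[R_\tau^i\mid h_\tau^i,u_\tau^i]+\max_{\tilde g_{\tau+1:T}^i}\mathbb{E}^{\tilde g_{\tau+1:T}^i,g^{-i}}\Big[\sum_{t=\tau+1}^T R_t^i\,\Big|\,h_\tau^i,u_\tau^i\Big],$$ the maximum being over behavioral strategies of player $i$ for times $\tau+1,\dots,T$. Then there exists a function $\hat Q_\tau^i:\mathcal{K}_\tau^i\times\mathcal{U}_\tau^i\to[-T,T]$ such that $Q_\tau^i(h_\tau^i,u_\tau^i)=\hat Q_\tau^i(k_\tau^i,u_\tau^i)$, where $k_\tau^i$ is the compression of $h_\tau^i$.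
   Context: Game model: finite set of players $\mathcal{I}$, times $\mathcal{T}=\{1,\dots,T\}$. At time $t$ each player $i$ takes action $U_t^i\in\mathcal{U}_t^i$, obtains reward $R_t^i\in[-1,1]$ and learns new information $Z_t^i\in\mathcal{Z}_t^i$. There is a state $X_t\in\mathcal{X}_t$ with $(X_{t+1},Z_t,R_t)=f_t(X_t,U_t,W_t)$ for fixed functions $f_t$. Primitive random variables $(X_1,H_1)$ and $W_1,\dots,W_T$ are mutually independent with commonly known distributions. All sets are finite. Perfect recall: $H_t^i=(H_1^i,Z_{1:t-1}^i)\in\mathcal{H}_t^i$, and $U_t^i$ is a component of $Z_t^i$. Behavioral strategy $g_t^i:\mathcal{H}_t^i\to\Delta(\mathcal{U}_t^i)$; fully mixed means every action has positive probability at every history. Conditional quantities given $(h_\tau^i,u_\tau^i)$ under $g^{-i}$ alone do not depend on player $i$'s strategy. A realization is admissible under $g$ if it has positive probability under $g$. Compression: $K_1^i=\iota_1^i(H_1^i)$, $K_t^i=\iota_t^i(K_{t-1}^i,Z_{t-1}^i)$ for fixed maps, finite value sets $\mathcal{K}_t^i$. Unilaterally sufficient information (USI): $K^i$ is USI for player $i$ if there exist $F_t^{i,g^i}:\mathcal{K}_t^i\to\Delta(\mathcal{H}_t^i)$ depending only on $g^i$ and $\Phi_t^{i,g^{-i}}:\mathcal{K}_t^i\to\Delta(\mathcal{X}_t\times\mathcal{H}_t^{-i})$ depending only on $g^{-i}$ with $\Pr^g(x_t,h_t\mid k_t^i)=F_t^{i,g^i}(h_t^i\mid k_t^i)\Phi_t^{i,g^{-i}}(x_t,h_t^{-i}\mid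 k_t^i)$ for all behavioral profiles $g$, all $t$, all $k_t^i$ admissible under $g$ (with $x_t,h_t^i,h_t^{-i}$ ranging independently; the left side is $0$ if they disagree on shared components). *)

theory Defs
  imports "HOL-Probability.Product_PMF"
begin

text \<open>Type parameters: 'p players, 's states, 'h initial private information H_1^i,
  'u actions, 'z new information Z_t^i, 'w noise W_t.
  A history of player i at time t is H_t^i = (H_1^i, [Z_1^i, ..., Z_{t-1}^i]).\<close>

record ('p, 's, 'h, 'u, 'z, 'w) game =
  horizon :: nat
  Xs :: "nat \<Rightarrow> 's set"
  Us :: "nat \<Rightarrow> 'p \<Rightarrow> 'u set"
  Zs :: "nat \<Rightarrow> 'p \<Rightarrow> 'z set"
  H1s :: "'p \<Rightarrow> 'h set"
  init :: "('s \<times> ('p \<Rightarrow> 'h)) pmf"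
  noise :: "nat \<Rightarrow> 'w pmf"
  dyn :: "nat \<Rightarrow> 's \<Rightarrow> ('p \<Rightarrow> 'u) \<Rightarrow> 'w \<Rightarrow> 's \<times> ('p \<Rightarrow> 'z) \<times> ('p \<Rightarrow> real)"
  act :: "nat \<Rightarrow> 'p \<Rightarrow> 'z \<Rightarrow> 'u"  \<comment> \<open>U_t^i is the component act t i of Z_t^i\<close>

text \<open>Well-formedness: all sets finite, rewards in [-1,1], perfect recall
  (the own action is a component of the new information).\<close>
definition game_wf :: "('p, 's, 'h, 'u, 'z, 'w) game \<Rightarrow> bool" where
  "game_wf G \<longleftrightarrow>
     (\<forall>t. finite (Xs G t)) \<and>
     (\<forall>t i. finite (Us G t i) \<and> Us G t i \<noteq> {}) \<and>
     (\<forall>t i. finite (Zs G t i)) \<and>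
     (\<forall>i. finite (H1s G i)) \<and>
     (\<forall>t. finite (set_pmf (noise G t))) \<and>
     set_pmf (init G) \<subseteq> Xs G 1 \<times> {h. \<forall>i. h i \<in> H1s G i} \<and>
     (\<forall>t\<in>{1..horizon G}. \<forall>x\<in>Xs G t. \<forall>u. (\<forall>i. u i \<in> Us G t i) \<longrightarrow>
        (\<forall>w\<in>set_pmf (noise G t).
          (case dyn G t x u w of (x', z, r) \<Rightarrow>
             x' \<in> Xs G (Suc t) \<and>
             (\<forall>i. z i \<in> Zs G t i \<and> act G t i (z i) = u i \<and> r i \<in> {-1..1}))))"

type_synonym ('h, 'z) hist = "'h \<times> 'z list"

definition hist_set :: "('p, 's, 'h, 'u, 'z, 'w) game \<Rightarrow> nat \<Rightarrow> 'p \<Rightarrow> ('h, 'z) hist set" where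
  "hist_set G t i = {(h0, zs). h0 \<in> H1s G i \<and> length zs = t - 1 \<and>
                                (\<forall>s < t - 1. zs ! s \<in> Zs G (Suc s) i)}"

type_synonym ('h, 'z, 'u) strat = "nat \<Rightarrow> ('h, 'z) hist \<Rightarrow> 'u pmf"
type_synonym ('p, 'h, 'z, 'u) profile = "nat \<Rightarrow> 'p \<Rightarrow> ('h, 'z) hist \<Rightarrow> 'u pmf"

definition behavioral_strat :: "('p, 's, 'h, 'u, 'z, 'w) game \<Rightarrow> 'p \<Rightarrow> ('h, 'z, 'u) strat \<Rightarrow> bool" where
  "behavioral_strat G i gi \<longleftrightarrow>
     (\<forall>t\<in>{1..horizon G}. \<forall>h\<in>hist_set G t i. set_pmf (gi t h) \<subseteq> Us G t i)"

definition fully_mixed_strat :: "('p, 's, 'h, 'u, 'z, 'w) game \<Rightarrow> 'p \<Rightarrow> ('h, 'z, 'u) strat \<Rightarrow> bool" where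
  "fully_mixed_strat G i gi \<longleftrightarrow>
     (\<forall>t\<in>{1..horizon G}. \<forall>h\<in>hist_set G t i. set_pmf (gi t h) = Us G t i)"

definition behavioral_profile :: "('p, 's, 'h, 'u, 'z, 'w) game \<Rightarrow> ('p, 'h, 'z, 'u) profile \<Rightarrow> bool" where
  "behavioral_profile G g \<longleftrightarrow> (\<forall>i. behavioral_strat G i (\<lambda>t. g t i))"

definition with_strat :: "'p \<Rightarrow> ('h, 'z, 'u) strat \<Rightarrow> ('p, 'h, 'z, 'u) profile \<Rightarrow> ('p, 'h, 'z, 'u) profile" where
  "with_strat i gi g = (\<lambda>t j. if j = i then gi t else g t j)"

text \<open>Forget player i's component (so that a function of the result depends only on the others).\<close>
definition mask :: "'p \<Rightarrow> ('p \<Rightarrow> 'a) \<Rightarrow> ('p \<Rightarrow> 'a)" where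
  "mask i f = (\<lambda>j. if j = i then undefined else f j)"

definition mask_profile :: "'p \<Rightarrow> ('p, 'h, 'z, 'u) profile \<Rightarrow> ('p, 'h, 'z, 'u) profile" where
  "mask_profile i g = (\<lambda>t. mask i (g t))"

text \<open>A configuration after n steps (i.e. at time n+1): the state X_{n+1}, the histories
  H_{n+1}^j of all players, and the list of reward vectors R_1, ..., R_n.\<close>
type_synonym ('p, 's, 'h, 'z) config = "'s \<times> ('p \<Rightarrow> ('h, 'z) hist) \<times> ('p \<Rightarrow> real) list"

fun run :: "('p::finite, 's, 'h, 'u, 'z, 'w) game \<Rightarrow> ('p, 'h, 'z, 'u) profile \<Rightarrow> nat
             \<Rightarrow> ('p, 's, 'h, 'z) config pmf" where
  "run G g 0 = map_pmf (\<lambda>(x, h0). (x, \<lambda>j. (h0 j, []), [])) (init G)"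
| "run G g (Suc n) =
     bind_pmf (run G g n) (\<lambda>(x, hs, rs).
       bind_pmf (Pi_pmf UNIV undefined (\<lambda>j. g (Suc n) j (hs j))) (\<lambda>u.
         map_pmf (\<lambda>w. case dyn G (Suc n) x u w of (x', z, r) \<Rightarrow>
                          (x', \<lambda>j. (fst (hs j), snd (hs j) @ [z j]), rs @ [r]))
                 (noise G (Suc n))))"

definition cfg_state :: "('p, 's, 'h, 'z) config \<Rightarrow> 's" where "cfg_state c = fst c"
definition cfg_hist :: "('p, 's, 'h, 'z) config \<Rightarrow> 'p \<Rightarrow> ('h, 'z) hist" where "cfg_hist c = fst (snd c)"
definition cfg_rew :: "('p, 's, 'h, 'z) config \<Rightarrow> nat \<Rightarrow> 'p \<Rightarrow> real" where
  "cfg_rew c t i = (snd (snd c) ! (t - 1)) i"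

definition hist_at :: "nat \<Rightarrow> ('h, 'z) hist \<Rightarrow> ('h, 'z) hist" where
  "hist_at \<tau> h = (fst h, take (\<tau> - 1) (snd h))"

definition act_at :: "('p, 's, 'h, 'u, 'z, 'w) game \<Rightarrow> nat \<Rightarrow> 'p \<Rightarrow> ('h, 'z) hist \<Rightarrow> 'u" where
  "act_at G \<tau> i h = act G \<tau> i (snd h ! (\<tau> - 1))"

definition cprob :: "'a pmf \<Rightarrow> 'a set \<Rightarrow> 'a set \<Rightarrow> real" where
  "cprob M A B = measure_pmf.prob M (A \<inter> B) / measure_pmf.prob M B"

definition cexp :: "'a pmf \<Rightarrow> 'a set \<Rightarrow> ('a \<Rightarrow> real) \<Rightarrow> real" where
  "cexp M B X = measure_pmf.expectation M (\<lambda>c. indicator B c * X c) / measure_pmf.prob M B"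

fun kfold :: "(nat \<Rightarrow> 'p \<Rightarrow> 'k \<Rightarrow> 'z \<Rightarrow> 'k) \<Rightarrow> 'p \<Rightarrow> nat \<Rightarrow> 'k \<Rightarrow> 'z list \<Rightarrow> 'k" where
  "kfold iota i t k [] = k"
| "kfold iota i t k (z # zs) = kfold iota i (Suc t) (iota (Suc t) i k z) zs"

definition compress :: "('p \<Rightarrow> 'h \<Rightarrow> 'k) \<Rightarrow> (nat \<Rightarrow> 'p \<Rightarrow> 'k \<Rightarrow> 'z \<Rightarrow> 'k) \<Rightarrow> 'p \<Rightarrow> ('h, 'z) hist \<Rightarrow> 'k" where
  "compress iota1 iota i h = kfold iota i 1 (iota1 i (fst h)) (snd h)"

definition compression_wf :: "('p, 's, 'h, 'u, 'z, 'w) game \<Rightarrow> ('p \<Rightarrow> 'h \<Rightarrow> 'k)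
     \<Rightarrow> (nat \<Rightarrow> 'p \<Rightarrow> 'k \<Rightarrow> 'z \<Rightarrow> 'k) \<Rightarrow> (nat \<Rightarrow> 'p \<Rightarrow> 'k set) \<Rightarrow> bool" where
  "compression_wf G iota1 iota Ks \<longleftrightarrow>
     (\<forall>t i. finite (Ks t i)) \<and>
     (\<forall>i. \<forall>h0\<in>H1s G i. iota1 i h0 \<in> Ks 1 i) \<and>
     (\<forall>t i. \<forall>k\<in>Ks t i. \<forall>z\<in>Zs G t i. iota (Suc t) i k z \<in> Ks (Suc t) i)"

text \<open>F receives only player i's
  strategy, Phi only the strategies of the other players (player i's component masked).\<close>
definition usi :: "('p::finite, 's, 'h, 'u, 'z, 'w) game \<Rightarrow> ('p \<Rightarrow> 'h \<Rightarrow> 'k)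
     \<Rightarrow> (nat \<Rightarrow> 'p \<Rightarrow> 'k \<Rightarrow> 'z \<Rightarrow> 'k) \<Rightarrow> 'p \<Rightarrow> bool" where
  "usi G iota1 iota i \<longleftrightarrow>
     (\<exists>(F :: ('h, 'z, 'u) strat \<Rightarrow> nat \<Rightarrow> 'k \<Rightarrow> ('h, 'z) hist pmf)
       (Phi :: ('p, 'h, 'z, 'u) profile \<Rightarrow> nat \<Rightarrow> 'k \<Rightarrow> ('s \<times> ('p \<Rightarrow> ('h, 'z) hist)) pmf).
      \<forall>g. behavioral_profile G g \<longrightarrow>
        (\<forall>t\<in>{1..horizon G}. \<forall>k.
          let M = run G g (t - 1); Ek = {c. compress iota1 iota i (cfg_hist c i) = k} in
          measure_pmf.prob M Ek > 0 \<longrightarrow>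
          (\<forall>x hs. cprob M {c. cfg_state c = x \<and> cfg_hist c = hs} Ek
                  = pmf (F (\<lambda>t. g t i) t k) (hs i)
                    * pmf (Phi (mask_profile i g) t k) (x, mask i hs))))"

definition ev_hu :: "('p, 's, 'h, 'u, 'z, 'w) game \<Rightarrow> nat \<Rightarrow> 'p \<Rightarrow> ('h, 'z) hist \<Rightarrow> 'u
     \<Rightarrow> ('p, 's, 'h, 'z) config set" where
  "ev_hu G \<tau> i h u = {c. hist_at \<tau> (cfg_hist c i) = h \<and> act_at G \<tau> i (cfg_hist c i) = u}"

text \<open>The profile g supplies player i's strategy up to time \<tau>
  (these values are irrelevant by the context's remark); the max is written as a Sup.\<close>
definition Qfun :: "('p::finite, 's, 'h, 'u, 'z, 'w) game \<Rightarrow> ('p, 'h, 'z, 'u) profile \<Rightarrow> 'p \<Rightarrow> nat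
     \<Rightarrow> ('h, 'z) hist \<Rightarrow> 'u \<Rightarrow> real" where
  "Qfun G g i \<tau> h u =
     cexp (run G g (horizon G)) (ev_hu G \<tau> i h u) (\<lambda>c. cfg_rew c \<tau> i)
     + (SUP gt \<in> {gt. behavioral_strat G i gt}.
          cexp (run G (with_strat i (\<lambda>t. if t \<le> \<tau> then g t i else gt t) g) (horizon G))
               (ev_hu G \<tau> i h u) (\<lambda>c. \<Sum>t\<in>{\<tau>+1..horizon G}. cfg_rew c t i))"

end

theory Submission
  imports Defs
begin


definition nextc :: "('p, 's, 'h, 'u, 'z, 'w) game \<Rightarrow> nat \<Rightarrow> ('p, 's, 'h, 'z) config \<Rightarrow> ('p \<Rightarrow> 'u) \<Rightarrow> 'w \<Rightarrow> ('p, 's, 'h, 'z) config" where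
  "nextc G t c a w = (case c of (x, hs, rs) \<Rightarrow> case dyn G t x a w of (x', z, r) \<Rightarrow>
       (x', \<lambda>j. (fst (hs j), snd (hs j) @ [z j]), rs @ [r]))"

definition step :: "('p::finite, 's, 'h, 'u, 'z, 'w) game \<Rightarrow> ('p, 'h, 'z, 'u) profile \<Rightarrow> nat
   \<Rightarrow> ('p, 's, 'h, 'z) config \<Rightarrow> ('p, 's, 'h, 'z) config pmf" where
  "step G p t c = bind_pmf (Pi_pmf UNIV undefined (\<lambda>j. p t j (cfg_hist c j)))
      (\<lambda>a. map_pmf (nextc G t c a) (noise G t))"

lemma run_Suc_step: "run G p (Suc n) = bind_pmf (run G p n) (step G p (Suc n))"
  unfolding run.simps step_def
  by (intro bind_pmf_cong refl) (auto simp: cfg_hist_def nextc_def intro!: bind_pmf_cong map_pmf_cong)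

fun cont :: "('p::finite, 's, 'h, 'u, 'z, 'w) game \<Rightarrow> ('p, 'h, 'z, 'u) profile \<Rightarrow> nat \<Rightarrow> nat
   \<Rightarrow> ('p, 's, 'h, 'z) config \<Rightarrow> ('p, 's, 'h, 'z) config pmf" where
  "cont G p n 0 c = return_pmf c"
| "cont G p n (Suc m) c = bind_pmf (step G p (Suc n) c) (cont G p (Suc n) m)"

lemma run_add: "run G p (n + m) = bind_pmf (run G p n) (cont G p n m)"
proof (induction m arbitrary: n)
  case 0
  then show ?case by (simp add: bind_return_pmf')
next
  case (Suc m)
  have "run G p (n + Suc m) = run G p (Suc n + m)" by simp
  also have "\<dots> = bind_pmf (run G p (Suc n)) (cont G p (Suc n) m)" by (rule Suc.IH)
  also have "\<dots> = bind_pmf (run G p n) (cont G p n (Suc m))"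
  proof -
    have eq: "cont G p n (Suc m) = (\<lambda>c. bind_pmf (step G p (Suc n) c) (cont G p (Suc n) m))"
      by (rule ext) simp
    show ?thesis by (simp only: run_Suc_step bind_assoc_pmf eq)
  qed
  finally show ?case .
qed

lemma step_cong: "p t = p' t \<Longrightarrow> step G p t c = step G p' t c"
  unfolding step_def by (simp only:)

lemma run_cong: "(\<And>t. t \<le> n \<Longrightarrow> p t = p' t) \<Longrightarrow> run G p n = run G p' n"
proof (induction n)
  case 0 then show ?case by simp
next
  case (Suc n)
  have "run G p n = run G p' n" using Suc by simp
  moreover have "step G p (Suc n) = step G p' (Suc n)"
    using Suc.prems[of "Suc n"] by (intro ext step_cong) simp
  ultimately show ?case by (simp only: run_Suc_step)
qed

lemma cont_cong: "(\<And>t. t > n \<Longrightarrow> p t = p' t) \<Longrightarrow> cont G p n m c = cont G p' n m c"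
proof (induction m arbitrary: n c)
  case 0 then show ?case by simp
next
  case (Suc m)
  have "step G p (Suc n) c = step G p' (Suc n) c" by (rule step_cong) (simp add: Suc.prems)
  moreover have "cont G p (Suc n) m = cont G p' (Suc n) m"
    by (rule ext, rule Suc.IH) (simp add: Suc.prems)
  ultimately show ?case by simp
qed

lemma cont_couple:
  assumes "\<And>t c. t \<ge> n \<Longrightarrow> step G p (Suc t) (\<Psi> c) = map_pmf \<Psi> (step G p' (Suc t) c)"
  shows "cont G p n m (\<Psi> c) = map_pmf \<Psi> (cont G p' n m c)"
  using assms
proof (induction m arbitrary: n c)
  case 0 then show ?case by simp
next
  case (Suc m)
  have "cont G p n (Suc m) (\<Psi> c) = bind_pmf (map_pmf \<Psi> (step G p' (Suc n) c)) (cont G p (Suc n) m)"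
    using Suc.prems[of n c] by (simp del: cont.simps add: cont.simps(2))
  also have "\<dots> = bind_pmf (step G p' (Suc n) c) (\<lambda>c'. cont G p (Suc n) m (\<Psi> c'))"
    by (simp add: bind_map_pmf)
  also have "\<dots> = bind_pmf (step G p' (Suc n) c) (\<lambda>c'. map_pmf \<Psi> (cont G p' (Suc n) m c'))"
  proof -
    have "\<And>c'. cont G p (Suc n) m (\<Psi> c') = map_pmf \<Psi> (cont G p' (Suc n) m c')"
      by (rule Suc.IH) (rule Suc.prems, simp)
    then show ?thesis by simp
  qed
  also have "\<dots> = map_pmf \<Psi> (cont G p' n (Suc m) c)"
    by (simp add: map_bind_pmf)
  finally show ?case .
qed

lemma step_set: "c' \<in> set_pmf (step G p t c) \<Longrightarrow>
   \<exists>a w. a \<in> set_pmf (Pi_pmf UNIV undefined (\<lambda>j. p t j (cfg_hist c j))) \<and> w \<in> set_pmf (noise G t) \<and> c' = nextc G t c a w"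
  by (auto simp: step_def)

lemma nextc_ext: "\<exists>z r. (\<forall>j. cfg_hist (nextc G t c a w) j = (fst (cfg_hist c j), snd (cfg_hist c j) @ [z j]))
   \<and> snd (snd (nextc G t c a w)) = snd (snd c) @ [r]"
  by (auto simp: nextc_def cfg_hist_def split: prod.splits)

lemma cont_ext: "c' \<in> set_pmf (cont G p n m c) \<Longrightarrow>
   (\<forall>j. fst (cfg_hist c' j) = fst (cfg_hist c j) \<and> (\<exists>zs. snd (cfg_hist c' j) = snd (cfg_hist c j) @ zs))
   \<and> (\<exists>rs. snd (snd c') = snd (snd c) @ rs)"
proof (induction m arbitrary: n c)
  case 0 then show ?case by simp
next
  case (Suc m)
  then obtain c1 where c1: "c1 \<in> set_pmf (step G p (Suc n) c)" "c' \<in> set_pmf (cont G p (Suc n) m c1)"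
    by auto
  from step_set[OF c1(1)] obtain a w where "c1 = nextc G (Suc n) c a w" by blast
  with nextc_ext[of G "Suc n" c a w] obtain z r where zr: "\<forall>j. cfg_hist c1 j = (fst (cfg_hist c j), snd (cfg_hist c j) @ [z j])"
     "snd (snd c1) = snd (snd c) @ [r]" by blast
  from Suc.IH[OF c1(2)] zr show ?case by fastforce
qed



definition inv :: "('p, 's, 'h, 'u, 'z, 'w) game \<Rightarrow> nat \<Rightarrow> ('p, 's, 'h, 'z) config \<Rightarrow> bool" where
  "inv G n c \<longleftrightarrow> cfg_state c \<in> Xs G (Suc n) \<and> (\<forall>j. cfg_hist c j \<in> hist_set G (Suc n) j)
     \<and> length (snd (snd c)) = n \<and> (\<forall>r\<in>set (snd (snd c)). \<forall>j. r j \<in> {-1..1})"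

lemma behav_Us: "behavioral_profile G p \<Longrightarrow> t \<in> {1..horizon G} \<Longrightarrow> hh \<in> hist_set G t j
   \<Longrightarrow> set_pmf (p t j hh) \<subseteq> Us G t j"
  unfolding behavioral_profile_def behavioral_strat_def by blast

lemma Pi_set_fin: "finite A \<Longrightarrow> (\<And>j. finite (set_pmf (P j))) \<Longrightarrow> finite (set_pmf (Pi_pmf A d P))"
  by (subst set_Pi_pmf) (auto intro!: finite_PiE_dflt)

lemma Pi_set_mem: "finite A \<Longrightarrow> a \<in> set_pmf (Pi_pmf A d P) \<Longrightarrow> j \<in> A \<Longrightarrow> a j \<in> set_pmf (P j)"
  by (subst (asm) set_Pi_pmf) (auto simp: PiE_dflt_def)

lemma finite_funs: "(\<And>i. finite (A i)) \<Longrightarrow> finite {h :: 'a::finite \<Rightarrow> 'b. \<forall>i. h i \<in> A i}"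
proof -
  assume "\<And>i. finite (A i)"
  moreover have "{h :: 'a::finite \<Rightarrow> 'b. \<forall>i. h i \<in> A i} = PiE UNIV A" by (auto simp: PiE_def)
  ultimately show ?thesis by (simp add: finite_PiE)
qed

locale gw =
  fixes G :: "('p::finite, 's, 'h, 'u, 'z, 'w) game"
  assumes wf: "game_wf G"
begin

lemma fin_Us: "finite (Us G t j)" and ne_Us: "Us G t j \<noteq> {}"
  using wf by (auto simp: game_wf_def)

lemma dyn_wf: "t \<in> {1..horizon G} \<Longrightarrow> x \<in> Xs G t \<Longrightarrow> (\<forall>j. a j \<in> Us G t j) \<Longrightarrow> w \<in> set_pmf (noise G t)
   \<Longrightarrow> dyn G t x a w = (x', z, r) \<Longrightarrow> x' \<in> Xs G (Suc t) \<and> (\<forall>j. z j \<in> Zs G t j \<and> act G t j (z j) = a j \<and> r j \<in> {-1..1})"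
proof -
  assume as: "t \<in> {1..horizon G}" "x \<in> Xs G t" "\<forall>j. a j \<in> Us G t j" "w \<in> set_pmf (noise G t)" "dyn G t x a w = (x', z, r)"
  have all: "\<forall>t\<in>{1..horizon G}. \<forall>x\<in>Xs G t. \<forall>u. (\<forall>i. u i \<in> Us G t i) \<longrightarrow>
        (\<forall>w\<in>set_pmf (noise G t).
          (case dyn G t x u w of (x', z, r) \<Rightarrow>
             x' \<in> Xs G (Suc t) \<and>
             (\<forall>i. z i \<in> Zs G t i \<and> act G t i (z i) = u i \<and> r i \<in> {-1..1})))"
    using wf unfolding game_wf_def by (elim conjE) assumption
  then have "case dyn G t x a w of (x', z, r) \<Rightarrow>
             x' \<in> Xs G (Suc t) \<and>
             (\<forall>i. z i \<in> Zs G t i \<and> act G t i (z i) = a i \<and> r i \<in> {-1..1})"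
  proof -
    from all as(1) have h1: "\<forall>x\<in>Xs G t. \<forall>u. (\<forall>i. u i \<in> Us G t i) \<longrightarrow>
        (\<forall>w\<in>set_pmf (noise G t).
          (case dyn G t x u w of (x', z, r) \<Rightarrow>
             x' \<in> Xs G (Suc t) \<and>
             (\<forall>i. z i \<in> Zs G t i \<and> act G t i (z i) = u i \<and> r i \<in> {-1..1})))" by (rule bspec)
    from h1 as(2) have h2: "\<forall>u. (\<forall>i. u i \<in> Us G t i) \<longrightarrow>
        (\<forall>w\<in>set_pmf (noise G t).
          (case dyn G t x u w of (x', z, r) \<Rightarrow>
             x' \<in> Xs G (Suc t) \<and>
             (\<forall>i. z i \<in> Zs G t i \<and> act G t i (z i) = u i \<and> r i \<in> {-1..1})))" by (rule bspec)
    then have "(\<forall>i. a i \<in> Us G t i) \<longrightarrow> (\<forall>w\<in>set_pmf (noise G t).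
          (case dyn G t x a w of (x', z, r) \<Rightarrow>
             x' \<in> Xs G (Suc t) \<and>
             (\<forall>i. z i \<in> Zs G t i \<and> act G t i (z i) = a i \<and> r i \<in> {-1..1})))" by (rule spec)
    from this as(3) have h3: "\<forall>w\<in>set_pmf (noise G t).
          (case dyn G t x a w of (x', z, r) \<Rightarrow>
             x' \<in> Xs G (Suc t) \<and>
             (\<forall>i. z i \<in> Zs G t i \<and> act G t i (z i) = a i \<and> r i \<in> {-1..1}))"
      by (rule mp)
    from h3 as(4) show ?thesis by (rule bspec)
  qed
  then show ?thesis using as(5) by simp
qed

lemma Pi_step_fin:
  assumes "behavioral_profile G p" "t \<in> {1..horizon G}" "\<forall>j. hs j \<in> hist_set G t j"
  shows "finite (set_pmf (Pi_pmf A d (\<lambda>j. p t j (hs j))))"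
    and "a \<in> set_pmf (Pi_pmf UNIV d (\<lambda>j. p t j (hs j))) \<Longrightarrow> a j \<in> Us G t j"
proof -
  have "\<And>j. finite (set_pmf (p t j (hs j)))"
    using behav_Us[OF assms(1,2)] assms(3) fin_Us by (meson finite_subset)
  then show "finite (set_pmf (Pi_pmf A d (\<lambda>j. p t j (hs j))))"
    by (intro Pi_set_fin) auto
  show "a \<in> set_pmf (Pi_pmf UNIV d (\<lambda>j. p t j (hs j))) \<Longrightarrow> a j \<in> Us G t j"
  proof -
    assume a: "a \<in> set_pmf (Pi_pmf UNIV d (\<lambda>j. p t j (hs j)))"
    have "set_pmf (p t j (hs j)) \<subseteq> Us G t j" using behav_Us[OF assms(1,2)] assms(3) by blast
    moreover have "a j \<in> set_pmf (p t j (hs j))" using Pi_set_mem[of UNIV a d "\<lambda>j. p t j (hs j)" j] a by simp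
    ultimately show ?thesis by (rule subsetD)
  qed
qed

lemma fin_noise: "finite (set_pmf (noise G t))"
  using wf by (simp add: game_wf_def)

lemma hist_set_snoc: "hh \<in> hist_set G (Suc n) j \<Longrightarrow> z \<in> Zs G (Suc n) j
   \<Longrightarrow> (fst hh, snd hh @ [z]) \<in> hist_set G (Suc (Suc n)) j"
  unfolding hist_set_def by (auto simp: nth_append less_Suc_eq)

lemma step_fin:
  assumes p: "behavioral_profile G p" and n: "Suc n \<le> horizon G" and c: "inv G n c"
  shows "finite (set_pmf (step G p (Suc n) c))"
proof -
  have hs: "\<forall>j. cfg_hist c j \<in> hist_set G (Suc n) j" using c by (simp add: inv_def)
  have t: "Suc n \<in> {1..horizon G}" using n by simp
  have "finite (set_pmf (Pi_pmf UNIV undefined (\<lambda>j. p (Suc n) j (cfg_hist c j))))"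
    by (rule Pi_step_fin(1)[OF p t hs])
  then show ?thesis unfolding step_def using fin_noise by (simp add: set_bind_pmf)
qed

lemma step_inv:
  assumes p: "behavioral_profile G p" and n: "Suc n \<le> horizon G" and c: "inv G n c"
    and c': "c' \<in> set_pmf (step G p (Suc n) c)"
  shows "inv G (Suc n) c'"
proof -
  have hs: "\<forall>j. cfg_hist c j \<in> hist_set G (Suc n) j" using c by (simp add: inv_def)
  have t: "Suc n \<in> {1..horizon G}" using n by simp
  from step_set[OF c'] obtain a w where aw: "a \<in> set_pmf (Pi_pmf UNIV undefined (\<lambda>j. p (Suc n) j (cfg_hist c j)))"
    "w \<in> set_pmf (noise G (Suc n))" "c' = nextc G (Suc n) c a w" by blast
  have aU: "\<forall>j. a j \<in> Us G (Suc n) j" using Pi_step_fin(2)[OF p t hs aw(1)] by blast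
  obtain x hsx rs where cx: "c = (x, hsx, rs)" by (cases c) auto
  obtain x' z r where d: "dyn G (Suc n) x a w = (x', z, r)" by (cases "dyn G (Suc n) x a w") auto
  have x: "x \<in> Xs G (Suc n)" using c cx by (simp add: inv_def cfg_state_def)
  note D = dyn_wf[OF t x aU aw(2) d]
  have c'eq: "c' = (x', \<lambda>j. (fst (hsx j), snd (hsx j) @ [z j]), rs @ [r])"
    using aw(3) cx d by (simp add: nextc_def)
  have h1: "\<forall>j. (fst (hsx j), snd (hsx j) @ [z j]) \<in> hist_set G (Suc (Suc n)) j"
  proof
    fix j
    have "hsx j \<in> hist_set G (Suc n) j" using hs cx by (simp add: cfg_hist_def)
    then show "(fst (hsx j), snd (hsx j) @ [z j]) \<in> hist_set G (Suc (Suc n)) j"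
      using D by (intro hist_set_snoc) auto
  qed
  have "length rs = n" "\<forall>r\<in>set rs. \<forall>j. r j \<in> {-1..1}" using c cx by (auto simp: inv_def)
  then show ?thesis using c'eq D h1 by (auto simp: inv_def cfg_state_def cfg_hist_def)
qed

lemma run_inv:
  assumes p: "behavioral_profile G p"
  shows "n \<le> horizon G \<Longrightarrow> finite (set_pmf (run G p n)) \<and> (\<forall>c\<in>set_pmf (run G p n). inv G n c)"
proof (induction n)
  case 0
  have sub: "set_pmf (init G) \<subseteq> Xs G 1 \<times> {h. \<forall>i. h i \<in> H1s G i}" using wf by (simp add: game_wf_def)
  have "finite (Xs G 1 \<times> {h. \<forall>i. h i \<in> H1s G i})"
    using wf by (intro finite_cartesian_product finite_funs) (auto simp: game_wf_def)
  then have f: "finite (set_pmf (init G))" using sub finite_subset by blast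
  have "\<forall>c\<in>set_pmf (run G p 0). inv G 0 c"
  proof
    fix c assume "c \<in> set_pmf (run G p 0)"
    then obtain x h0 where "(x, h0) \<in> set_pmf (init G)" "c = (x, \<lambda>j. (h0 j, []), [])" by auto
    with sub show "inv G 0 c" by (auto simp: inv_def cfg_state_def cfg_hist_def hist_set_def)
  qed
  then show ?case using f by simp
next
  case (Suc n)
  then have IH: "finite (set_pmf (run G p n))" "\<forall>c\<in>set_pmf (run G p n). inv G n c" by auto
  have "finite (set_pmf (run G p (Suc n)))"
    unfolding run_Suc_step using IH step_fin[OF p Suc.prems] by (simp add: set_bind_pmf)
  moreover have "\<forall>c\<in>set_pmf (run G p (Suc n)). inv G (Suc n) c"
    unfolding run_Suc_step using IH step_inv[OF p Suc.prems] by (auto simp: set_bind_pmf)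
  ultimately show ?case by blast
qed

end


lemma exp_bind_fin:
  fixes f :: "'b \<Rightarrow> real"
  assumes "finite (set_pmf (bind_pmf M K))" "finite (set_pmf M)"
  shows "measure_pmf.expectation (bind_pmf M K) f = measure_pmf.expectation M (\<lambda>x. measure_pmf.expectation (K x) f)"
proof -
  have fk: "\<And>x. x \<in> set_pmf M \<Longrightarrow> finite (set_pmf (K x))"
    using assms(1) by (rule finite_subset[rotated]) (auto simp: set_bind_pmf)
  have "measure_pmf.expectation (bind_pmf M K) f = (\<Sum>a\<in>set_pmf M. pmf M a *\<^sub>R measure_pmf.expectation (K a) f)"
    by (rule pmf_expectation_bind[OF assms(2) fk subset_refl])
  also have "\<dots> = measure_pmf.expectation M (\<lambda>x. measure_pmf.expectation (K x) f)"
    by (rule integral_measure_pmf[OF assms(2), symmetric]) auto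
  finally show ?thesis .
qed

lemma exp_ind_point:
  fixes c :: "'a \<Rightarrow> real"
  shows "measure_pmf.expectation M (\<lambda>y. indicator {u} y * c y) = pmf M u * c u"
  by (subst integral_measure_pmf_real[of "{u}"]) (auto simp: indicator_def)

lemma Pi_split:
  fixes P :: "'p::finite \<Rightarrow> 'u pmf" and K :: "('p \<Rightarrow> 'u) \<Rightarrow> real"
  assumes fin: "\<And>j. finite (set_pmf (P j))"
  shows "measure_pmf.expectation (Pi_pmf UNIV d P) (\<lambda>a. indicator {u} (a i) * K a)
     = pmf (P i) u * measure_pmf.expectation (Pi_pmf (UNIV - {i}) d P) (\<lambda>f. K (f(i := u)))"
proof -
  let ?B = "Pi_pmf (UNIV - {i}) d P"
  have U: "UNIV = insert i (UNIV - {i})" by blast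
  have finB: "finite (set_pmf ?B)" by (rule Pi_set_fin) (auto simp: fin)
  have "Pi_pmf UNIV d P = map_pmf (\<lambda>(y,f). f(i:=y)) (pair_pmf (P i) ?B)"
    by (subst U, rule Pi_pmf_insert) auto
  then have "measure_pmf.expectation (Pi_pmf UNIV d P) (\<lambda>a. indicator {u} (a i) * K a)
      = measure_pmf.expectation (pair_pmf (P i) ?B) (\<lambda>x. indicator {u} (fst x) * K ((snd x)(i := fst x)))"
    by (simp add: case_prod_beta)
  also have "pair_pmf (P i) ?B = bind_pmf (P i) (\<lambda>y. map_pmf (\<lambda>f. (y, f)) ?B)"
    by (simp add: pair_pmf_def map_pmf_def)
  also have "measure_pmf.expectation (bind_pmf (P i) (\<lambda>y. map_pmf (\<lambda>f. (y, f)) ?B)) (\<lambda>x. indicator {u} (fst x) * K ((snd x)(i := fst x)))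
     = measure_pmf.expectation (P i) (\<lambda>y. measure_pmf.expectation (map_pmf (\<lambda>f. (y, f)) ?B) (\<lambda>x. indicator {u} (fst x) * K ((snd x)(i := fst x))))"
    by (rule exp_bind_fin) (auto simp: set_bind_pmf fin finB)
  also have "\<dots> = measure_pmf.expectation (P i) (\<lambda>y. indicator {u} y * measure_pmf.expectation ?B (\<lambda>f. K (f(i:=y))))"
    by simp
  also have "\<dots> = pmf (P i) u * measure_pmf.expectation ?B (\<lambda>f. K (f(i:=u)))"
    by (rule exp_ind_point)
  finally show ?thesis .
qed

lemma exp_cong: "(\<And>x. x \<in> set_pmf M \<Longrightarrow> f x = g x) \<Longrightarrow>
   measure_pmf.expectation M f = (measure_pmf.expectation M g :: real)"
  by (rule integral_cong_AE) (auto simp: AE_measure_pmf_iff)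

lemma ev_stable:
  assumes "1 \<le> \<tau>" "\<tau> \<le> length (snd hh)"
  shows "hist_at \<tau> (fst hh, snd hh @ zs) = hist_at \<tau> hh" "act_at G \<tau> i (fst hh, snd hh @ zs) = act_at G \<tau> i hh"
  using assms by (auto simp: hist_at_def act_at_def nth_append)

lemma hist_set_len: "hh \<in> hist_set G t j \<Longrightarrow> length (snd hh) = t - 1"
  by (auto simp: hist_set_def)

context gw
begin

lemma cont_sub_run:
  assumes "c \<in> set_pmf (run G q n)"
  shows "set_pmf (cont G q n m c) \<subseteq> set_pmf (run G q (n + m))"
  using assms by (auto simp: run_add set_bind_pmf)

lemma decomp_inner:
  fixes X :: "('p, 's, 'h, 'z) config \<Rightarrow> real"
  assumes q: "behavioral_profile G q" and tau: "\<tau> \<in> {1..horizon G}"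
    and c0: "c \<in> set_pmf (run G q (\<tau> - 1))"
  shows "measure_pmf.expectation (cont G q (\<tau> - 1) (Suc (horizon G - \<tau>)) c) (\<lambda>c. indicator (ev_hu G \<tau> i h u) c * X c)
   = indicator {c. cfg_hist c i = h} c * (pmf (q \<tau> i h) u *
        measure_pmf.expectation (Pi_pmf (UNIV - {i}) undefined (\<lambda>j. q \<tau> j (cfg_hist c j)))
          (\<lambda>f. measure_pmf.expectation (noise G \<tau>) (\<lambda>w. measure_pmf.expectation (cont G q \<tau> (horizon G - \<tau>) (nextc G \<tau> c (f(i:=u)) w)) X)))"
proof -
  let ?m0 = "horizon G - \<tau>"
  let ?P = "Pi_pmf UNIV undefined (\<lambda>j. q \<tau> j (cfg_hist c j))"
  let ?ev = "indicator (ev_hu G \<tau> i h u) :: ('p, 's, 'h, 'z) config \<Rightarrow> real"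
  let ?Y = "\<lambda>c'. measure_pmf.expectation (cont G q \<tau> ?m0 c') X"
  have Sn0: "Suc (\<tau> - 1) = \<tau>" and le: "Suc (\<tau> - 1) \<le> horizon G" and T: "\<tau> - 1 + Suc ?m0 = horizon G"
    using tau by auto
  have invc: "inv G (\<tau> - 1) c" using run_inv[OF q, of "\<tau> - 1"] tau c0 by auto
  have stepfin: "finite (set_pmf (step G q \<tau> c))" using step_fin[OF q le invc] by (simp only: Sn0)
  have stepinv: "\<And>c'. c' \<in> set_pmf (step G q \<tau> c) \<Longrightarrow> inv G \<tau> c'"
    using step_inv[OF q le invc] by (simp only: Sn0)
  have hsc: "\<forall>j. cfg_hist c j \<in> hist_set G \<tau> j" using invc unfolding inv_def Sn0 by blast
  have tau': "\<tau> \<in> {1..horizon G}" by (rule tau)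
  have Pfin: "finite (set_pmf ?P)" by (rule Pi_step_fin(1)[OF q tau' hsc])
  have cont_eq: "cont G q (\<tau> - 1) (Suc ?m0) c = bind_pmf (step G q \<tau> c) (cont G q \<tau> ?m0)"
    by (simp only: cont.simps Sn0)
  have finb: "finite (set_pmf (bind_pmf (step G q \<tau> c) (cont G q \<tau> ?m0)))"
  proof -
    have "set_pmf (cont G q (\<tau> - 1) (Suc ?m0) c) \<subseteq> set_pmf (run G q (horizon G))"
      using cont_sub_run[OF c0, of "Suc ?m0"] T by simp
    moreover have "finite (set_pmf (run G q (horizon G)))" using run_inv[OF q] by simp
    ultimately show ?thesis using cont_eq finite_subset by metis
  qed
  have "measure_pmf.expectation (cont G q (\<tau> - 1) (Suc ?m0) c) (\<lambda>c. ?ev c * X c)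
      = measure_pmf.expectation (step G q \<tau> c) (\<lambda>c'. measure_pmf.expectation (cont G q \<tau> ?m0 c') (\<lambda>c. ?ev c * X c))"
    unfolding cont_eq by (rule exp_bind_fin[OF finb stepfin])
  also have "\<dots> = measure_pmf.expectation (step G q \<tau> c) (\<lambda>c'. ?ev c' * ?Y c')"
  proof (rule exp_cong)
    fix c' assume c': "c' \<in> set_pmf (step G q \<tau> c)"
    have len: "length (snd (cfg_hist c' i)) = \<tau>"
      using stepinv[OF c'] hist_set_len by (fastforce simp: inv_def)
    have "measure_pmf.expectation (cont G q \<tau> ?m0 c') (\<lambda>c. ?ev c * X c)
        = measure_pmf.expectation (cont G q \<tau> ?m0 c') (\<lambda>c. ?ev c' * X c)"
    proof (rule exp_cong)
      fix c'' assume c'': "c'' \<in> set_pmf (cont G q \<tau> ?m0 c')"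
      from cont_ext[OF c''] obtain zs where "fst (cfg_hist c'' i) = fst (cfg_hist c' i)"
        "snd (cfg_hist c'' i) = snd (cfg_hist c' i) @ zs" by blast
      then have eq: "cfg_hist c'' i = (fst (cfg_hist c' i), snd (cfg_hist c' i) @ zs)"
        by (metis prod.collapse)
      have "1 \<le> \<tau>" using tau by simp
      then have "hist_at \<tau> (cfg_hist c'' i) = hist_at \<tau> (cfg_hist c' i)"
        "act_at G \<tau> i (cfg_hist c'' i) = act_at G \<tau> i (cfg_hist c' i)"
        unfolding eq using len by (auto simp: hist_at_def act_at_def nth_append)
      then show "?ev c'' * X c'' = ?ev c' * X c''"
        by (simp add: ev_hu_def indicator_def)
    qed
    then show "measure_pmf.expectation (cont G q \<tau> ?m0 c') (\<lambda>c. ?ev c * X c) = ?ev c' * ?Y c'"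
      by simp
  qed
  also have "\<dots> = measure_pmf.expectation ?P (\<lambda>a. measure_pmf.expectation (noise G \<tau>)
       (\<lambda>w. ?ev (nextc G \<tau> c a w) * ?Y (nextc G \<tau> c a w)))"
  proof -
    have "step G q \<tau> c = bind_pmf ?P (\<lambda>a. map_pmf (nextc G \<tau> c a) (noise G \<tau>))"
      by (simp add: step_def)
    then show ?thesis
      apply (simp only:)
      apply (subst exp_bind_fin[OF _ Pfin])
      using stepfin apply (simp only:)
      apply simp
      done
  qed
  also have "\<dots> = measure_pmf.expectation ?P (\<lambda>a. indicator {u} (a i) * (indicator {c. cfg_hist c i = h} c *
       measure_pmf.expectation (noise G \<tau>) (\<lambda>w. ?Y (nextc G \<tau> c a w))))"
  proof (rule exp_cong)
    fix a assume a: "a \<in> set_pmf ?P"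
    have aU: "\<forall>j. a j \<in> Us G \<tau> j" using Pi_step_fin(2)[OF q tau' hsc a] by blast
    obtain x hs rs where cx: "c = (x, hs, rs)" by (cases c) auto
    have x: "x \<in> Xs G \<tau>" using invc cx unfolding inv_def Sn0 by (simp add: cfg_state_def)
    have lh: "length (snd (hs i)) = \<tau> - 1" using hsc cx hist_set_len by (fastforce simp: cfg_hist_def)
    have "?ev (nextc G \<tau> c a w) = indicator {u} (a i) * indicator {c. cfg_hist c i = h} c"
      if w: "w \<in> set_pmf (noise G \<tau>)" for w
    proof -
      obtain x' z r where d: "dyn G \<tau> x a w = (x', z, r)" by (cases "dyn G \<tau> x a w") auto
      note D = dyn_wf[OF tau' x aU w d]
      have hn: "cfg_hist (nextc G \<tau> c a w) i = (fst (hs i), snd (hs i) @ [z i])"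
        using cx d by (simp add: nextc_def cfg_hist_def)
      have "hist_at \<tau> (cfg_hist (nextc G \<tau> c a w) i) = hs i"
        using hn lh by (simp add: hist_at_def)
      moreover have "act_at G \<tau> i (cfg_hist (nextc G \<tau> c a w) i) = a i"
        using hn lh D tau by (simp add: act_at_def nth_append)
      ultimately show ?thesis using cx by (auto simp: ev_hu_def indicator_def cfg_hist_def)
    qed
    then have "measure_pmf.expectation (noise G \<tau>) (\<lambda>w. ?ev (nextc G \<tau> c a w) * ?Y (nextc G \<tau> c a w))
       = measure_pmf.expectation (noise G \<tau>) (\<lambda>w. (indicator {u} (a i) * indicator {c. cfg_hist c i = h} c) * ?Y (nextc G \<tau> c a w))"
      by (intro exp_cong) simp
    also have "\<dots> = indicator {u} (a i) * (indicator {c. cfg_hist c i = h} c *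
       measure_pmf.expectation (noise G \<tau>) (\<lambda>w. ?Y (nextc G \<tau> c a w)))"
      by simp
    finally show "measure_pmf.expectation (noise G \<tau>) (\<lambda>w. ?ev (nextc G \<tau> c a w) * ?Y (nextc G \<tau> c a w))
       = indicator {u} (a i) * (indicator {c. cfg_hist c i = h} c *
       measure_pmf.expectation (noise G \<tau>) (\<lambda>w. ?Y (nextc G \<tau> c a w)))" .
  qed
  also have "\<dots> = indicator {c. cfg_hist c i = h} c * measure_pmf.expectation ?P (\<lambda>a. indicator {u} (a i) *
       measure_pmf.expectation (noise G \<tau>) (\<lambda>w. ?Y (nextc G \<tau> c a w)))"
  proof -
    have "\<And>a. indicator {u} (a i) * (indicator {c. cfg_hist c i = h} c *
       measure_pmf.expectation (noise G \<tau>) (\<lambda>w. ?Y (nextc G \<tau> c a w))) = 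
       indicator {c. cfg_hist c i = h} c * (indicator {u} (a i) *
       measure_pmf.expectation (noise G \<tau>) (\<lambda>w. ?Y (nextc G \<tau> c a w)))" by (rule mult.left_commute)
    then show ?thesis by (simp only: integral_mult_right_zero)
  qed
  also have "\<dots> = indicator {c. cfg_hist c i = h} c * (pmf (q \<tau> i (cfg_hist c i)) u *
       measure_pmf.expectation (Pi_pmf (UNIV - {i}) undefined (\<lambda>j. q \<tau> j (cfg_hist c j)))
          (\<lambda>f. measure_pmf.expectation (noise G \<tau>) (\<lambda>w. ?Y (nextc G \<tau> c (f(i:=u)) w))))"
  proof -
    have "\<And>j. finite (set_pmf (q \<tau> j (cfg_hist c j)))"
      using behav_Us[OF q tau'] hsc fin_Us by (meson finite_subset)
    then show ?thesis by (subst Pi_split) auto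
  qed
  also have "\<dots> = indicator {c. cfg_hist c i = h} c * (pmf (q \<tau> i h) u *
       measure_pmf.expectation (Pi_pmf (UNIV - {i}) undefined (\<lambda>j. q \<tau> j (cfg_hist c j)))
          (\<lambda>f. measure_pmf.expectation (noise G \<tau>) (\<lambda>w. ?Y (nextc G \<tau> c (f(i:=u)) w))))"
    by (cases "cfg_hist c i = h") auto
  finally show ?thesis .
qed

lemma decomp:
  fixes X :: "('p, 's, 'h, 'z) config \<Rightarrow> real"
  assumes q: "behavioral_profile G q" and tau: "\<tau> \<in> {1..horizon G}"
  shows "measure_pmf.expectation (run G q (horizon G)) (\<lambda>c. indicator (ev_hu G \<tau> i h u) c * X c)
   = measure_pmf.expectation (run G q (\<tau> - 1)) (\<lambda>c. indicator {c. cfg_hist c i = h} c * (pmf (q \<tau> i h) u *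
        measure_pmf.expectation (Pi_pmf (UNIV - {i}) undefined (\<lambda>j. q \<tau> j (cfg_hist c j)))
          (\<lambda>f. measure_pmf.expectation (noise G \<tau>) (\<lambda>w. measure_pmf.expectation (cont G q \<tau> (horizon G - \<tau>) (nextc G \<tau> c (f(i:=u)) w)) X))))"
proof -
  have T: "\<tau> - 1 + Suc (horizon G - \<tau>) = horizon G" using tau by auto
  have R: "run G q (horizon G) = bind_pmf (run G q (\<tau> - 1)) (cont G q (\<tau> - 1) (Suc (horizon G - \<tau>)))"
    using run_add[of G q "\<tau> - 1" "Suc (horizon G - \<tau>)"] by (simp only: T)
  have finT: "finite (set_pmf (run G q (horizon G)))" using run_inv[OF q] by simp
  have fin0: "finite (set_pmf (run G q (\<tau> - 1)))" using run_inv[OF q, of "\<tau> - 1"] tau by auto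
  show ?thesis
    unfolding R
    apply (subst exp_bind_fin[OF _ fin0])
     apply (fold R, rule finT)
    apply (rule exp_cong)
    apply (rule decomp_inner[OF q tau])
    apply assumption
    done
qed

end


lemma mask_upd: "m i = undefined \<Longrightarrow> mask i (m(i := v)) = m"
  by (auto simp: mask_def fun_eq_iff)

lemma upd_mask: "hs i = h \<Longrightarrow> (mask i hs)(i := h) = hs"
  by (auto simp: mask_def fun_eq_iff)

lemma usi_sum:
  fixes M :: "('p, 's, 'h, 'z) config pmf" and \<Theta> :: "('p, 's, 'h, 'z) config \<Rightarrow> real"
    and Fk :: "('h, 'z) hist pmf" and Phk :: "('s \<times> ('p \<Rightarrow> ('h, 'z) hist)) pmf"
  assumes finM: "finite (set_pmf M)"
    and usiF: "\<forall>x hs. cprob M {c. cfg_state c = x \<and> cfg_hist c = hs} Ek = pmf Fk (hs i) * pmf Phk (x, mask i hs)"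
    and Ek: "Ek = {c. \<kappa> (cfg_hist c i) = \<kappa> h}"
    and pos: "measure_pmf.prob M {c. cfg_hist c i = h} > 0"
    and Th: "\<And>c. c \<in> set_pmf M \<Longrightarrow> cfg_hist c i = h \<Longrightarrow> \<Theta> c = \<Xi> (cfg_state c) (cfg_hist c)"
  defines "B \<equiv> {y \<in> set_pmf Phk. snd y i = undefined}"
  shows "measure_pmf.expectation M (\<lambda>c. indicator {c. cfg_hist c i = h} c * \<Theta> c)
     = measure_pmf.prob M Ek * pmf Fk h * (\<Sum>y\<in>B. pmf Phk y * \<Xi> (fst y) ((snd y)(i := h)))"
    and "finite B" and "pmf Fk h > 0" and "measure_pmf.prob M Ek > 0"
proof -
  define N where "N = map_pmf (\<lambda>c. (cfg_state c, cfg_hist c)) M"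
  define S where "S = set_pmf N \<inter> {y. snd y i = h}"
  define P where "P = measure_pmf.prob M Ek"
  have finN: "finite (set_pmf N)" using finM by (simp add: N_def)
  have finS: "finite S" using finN by (simp add: S_def)
  have sub: "{c. cfg_hist c i = h} \<subseteq> Ek" using Ek by auto
  have Ppos: "P > 0"
    using pos measure_pmf.finite_measure_mono[OF sub, of M] unfolding P_def by simp
  then show "measure_pmf.prob M Ek > 0" by (simp add: P_def)
  have pN: "pmf N (x, hs) = P * pmf Fk h * pmf Phk (x, mask i hs)" if "hs i = h" for x hs
  proof -
    let ?A = "{c. cfg_state c = x \<and> cfg_hist c = hs}"
    have "pmf N (x, hs) = measure_pmf.prob M ?A"
      unfolding N_def pmf_map by (rule arg_cong[where f="measure_pmf.prob M"]) auto
    moreover have "?A \<inter> Ek = ?A" using Ek that by auto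
    moreover have "cprob M ?A Ek = pmf Fk h * pmf Phk (x, mask i hs)" using usiF that by simp
    ultimately show ?thesis using Ppos unfolding cprob_def P_def by (simp add: field_simps)
  qed
  have "measure_pmf.prob M {c. cfg_hist c i = h} = measure_pmf.prob N {y. snd y i = h}"
    unfolding N_def by simp
  also have "\<dots> = measure_pmf.prob N S"
    unfolding S_def using measure_Int_set_pmf[of N "{y. snd y i = h}"] by (simp add: Int_commute)
  also have "\<dots> = (\<Sum>y\<in>S. pmf N y)"
    using finS by (simp add: measure_measure_pmf_finite)
  also have "\<dots> = (\<Sum>y\<in>S. P * pmf Fk h * pmf Phk (fst y, mask i (snd y)))"
    by (rule sum.cong) (auto simp: S_def pN[symmetric])
  also have "\<dots> = pmf Fk h * (\<Sum>y\<in>S. P * pmf Phk (fst y, mask i (snd y)))"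
    by (simp add: sum_distrib_left ac_simps)
  finally have "pmf Fk h \<noteq> 0" using pos by auto
  then show Fpos: "pmf Fk h > 0" using pmf_nonneg[of Fk h] by linarith
  define \<psi> where "\<psi> = (\<lambda>y :: 's \<times> ('p \<Rightarrow> ('h, 'z) hist). (fst y, (snd y)(i := h)))"
  have inj: "inj_on \<psi> B"
  proof (rule inj_onI)
    fix y1 y2 assume "y1 \<in> B" "y2 \<in> B" "\<psi> y1 = \<psi> y2"
    then show "y1 = y2" unfolding B_def \<psi>_def
      by (cases y1, cases y2) (auto simp: fun_eq_iff split: if_splits, metis)
  qed
  have img: "\<psi> ` B = S"
  proof (intro equalityI subsetI)
    fix y assume "y \<in> \<psi> ` B"
    then obtain x m where xm: "(x, m) \<in> B" "y = (x, m(i := h))" unfolding \<psi>_def by auto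
    then have mi: "m i = undefined" "pmf Phk (x, m) > 0" unfolding B_def by (auto simp: pmf_positive)
    have "pmf N y = P * pmf Fk h * pmf Phk (x, m)" using xm pN mask_upd[of m i h, OF mi(1)] by simp
    then have "pmf N y > 0" using Ppos Fpos mi by simp
    then show "y \<in> S" using xm by (simp add: S_def set_pmf_iff)
  next
    fix y assume y: "y \<in> S"
    obtain x hs where yx: "y = (x, hs)" by (cases y)
    have hi: "hs i = h" using y yx by (simp add: S_def)
    have "pmf N y \<noteq> 0" using y by (simp add: S_def set_pmf_iff)
    then have "pmf Phk (x, mask i hs) \<noteq> 0" using pN[of hs x, OF hi] yx by simp
    then have "(x, mask i hs) \<in> B" unfolding B_def by (simp add: set_pmf_iff mask_def)
    moreover have "\<psi> (x, mask i hs) = y" using yx upd_mask[of hs i h, OF hi] by (simp add: \<psi>_def)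
    ultimately show "y \<in> \<psi> ` B" by force
  qed
  show finB: "finite B" using finS img inj by (metis finite_imageD)
  have "measure_pmf.expectation M (\<lambda>c. indicator {c. cfg_hist c i = h} c * \<Theta> c)
     = measure_pmf.expectation M (\<lambda>c. indicator {c. cfg_hist c i = h} c * \<Xi> (cfg_state c) (cfg_hist c))"
    by (rule exp_cong) (auto simp: Th indicator_def)
  also have "\<dots> = measure_pmf.expectation N (\<lambda>y. indicator {y. snd y i = h} y * \<Xi> (fst y) (snd y))"
    unfolding N_def by (simp add: indicator_def)
  also have "\<dots> = (\<Sum>y\<in>S. (indicator {y. snd y i = h} y * \<Xi> (fst y) (snd y)) * pmf N y)"
    by (rule integral_measure_pmf_real[OF finS]) (auto simp: S_def indicator_def)
  also have "\<dots> = (\<Sum>y\<in>S. \<Xi> (fst y) (snd y) * (P * pmf Fk h * pmf Phk (fst y, mask i (snd y))))"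
    by (rule sum.cong) (auto simp: S_def pN[symmetric])
  also have "\<dots> = (\<Sum>y\<in>B. \<Xi> (fst (\<psi> y)) (snd (\<psi> y)) * (P * pmf Fk h * pmf Phk (fst (\<psi> y), mask i (snd (\<psi> y)))))"
    using sum.reindex_bij_betw[of \<psi> B S, symmetric] inj img unfolding bij_betw_def by blast
  also have "\<dots> = (\<Sum>y\<in>B. P * pmf Fk h * (pmf Phk y * \<Xi> (fst y) ((snd y)(i := h))))"
    by (rule sum.cong) (auto simp: \<psi>_def B_def mask_upd)
  also have "\<dots> = P * pmf Fk h * (\<Sum>y\<in>B. pmf Phk y * \<Xi> (fst y) ((snd y)(i := h)))"
    by (simp add: sum_distrib_left)
  finally show "measure_pmf.expectation M (\<lambda>c. indicator {c. cfg_hist c i = h} c * \<Theta> c)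
     = measure_pmf.prob M Ek * pmf Fk h * (\<Sum>y\<in>B. pmf Phk y * \<Xi> (fst y) ((snd y)(i := h)))"
    by (simp add: P_def)
qed



definition relnext :: "('p, 's, 'h, 'u, 'z, 'w) game \<Rightarrow> 'p \<Rightarrow> nat \<Rightarrow> 's \<Rightarrow> ('p \<Rightarrow> ('h, 'z) hist) \<Rightarrow> ('p \<Rightarrow> 'u) \<Rightarrow> 'w
   \<Rightarrow> ('p, 's, 'h, 'z) config" where
  "relnext G i t x hs a w = (case dyn G t x a w of (x', z, r) \<Rightarrow>
     (x', (\<lambda>j. (fst (hs j), snd (hs j) @ [z j]))(i := (undefined, [z i])), []))"

definition Psi :: "'p \<Rightarrow> ('h, 'z) hist \<Rightarrow> ('p \<Rightarrow> real) list \<Rightarrow> ('p, 's, 'h, 'z) config \<Rightarrow> ('p, 's, 'h, 'z) config" where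
  "Psi i h rsp c = (fst c, (fst (snd c))(i := (fst h, snd h @ snd (fst (snd c) i))), rsp @ snd (snd c))"

definition shift :: "'p \<Rightarrow> ('h, 'z) hist \<Rightarrow> ('p, 'h, 'z, 'u) profile \<Rightarrow> ('p, 'h, 'z, 'u) profile" where
  "shift i h p = (\<lambda>t j hh. if j = i then p t i (fst h, snd h @ snd hh) else p t j hh)"

lemma relnext_upd: "relnext G i t x (hs(i := v)) a w = relnext G i t x hs a w"
  by (simp add: relnext_def fun_eq_iff split: prod.split)

lemma nextc_Psi:
  assumes "cfg_hist c i = h"
  shows "nextc G t c a w = Psi i h (snd (snd c) @ [snd (snd (dyn G t (cfg_state c) a w)) ]) (relnext G i t (cfg_state c) (cfg_hist c) a w)"
  using assms
  by (cases c; cases "dyn G t (cfg_state c) a w")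
     (auto simp: nextc_def Psi_def relnext_def cfg_hist_def cfg_state_def fun_eq_iff)

lemma step_Psi: "step G p t (Psi i h rsp c) = map_pmf (Psi i h rsp) (step G (shift i h p) t c)"
proof -
  have P: "Pi_pmf UNIV undefined (\<lambda>j. p t j (cfg_hist (Psi i h rsp c) j))
      = Pi_pmf UNIV undefined (\<lambda>j. shift i h p t j (cfg_hist c j))"
    by (rule Pi_pmf_cong) (auto simp: Psi_def shift_def cfg_hist_def)
  have N: "nextc G t (Psi i h rsp c) a w = Psi i h rsp (nextc G t c a w)" for a w
    by (cases c; cases "dyn G t (fst c) a w") (auto simp: nextc_def Psi_def fun_eq_iff)
  have N': "nextc G t (Psi i h rsp c) a = (\<lambda>w. Psi i h rsp (nextc G t c a w))" for a
    by (rule ext) (rule N)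
  show ?thesis unfolding step_def P
    by (simp add: map_bind_pmf map_pmf_comp N')
qed

lemma cont_Psi: "cont G p n m (Psi i h rsp c) = map_pmf (Psi i h rsp) (cont G (shift i h p) n m c)"
  by (rule cont_couple) (rule step_Psi)

lemma prob_exp: "measure_pmf.prob M A = measure_pmf.expectation M (\<lambda>c. indicator A c * (1::real))"
  by simp

lemma cexp_bound:
  fixes X :: "'a \<Rightarrow> real"
  assumes fin: "finite (set_pmf M)" and b: "\<And>c. c \<in> set_pmf M \<Longrightarrow> c \<in> A \<Longrightarrow> \<bar>X c\<bar> \<le> L"
    and pos: "measure_pmf.prob M A > 0"
  shows "\<bar>cexp M A X\<bar> \<le> L"
proof -
  have int: "integrable (measure_pmf M) f" for f :: "'a \<Rightarrow> real"
    using fin by (rule integrable_measure_pmf_finite)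
  have "\<bar>measure_pmf.expectation M (\<lambda>c. indicator A c * X c)\<bar>
      \<le> measure_pmf.expectation M (\<lambda>c. \<bar>indicator A c * X c\<bar>)"
    using integral_norm_bound[of M "\<lambda>c. indicator A c * X c"] by simp
  also have "\<dots> \<le> measure_pmf.expectation M (\<lambda>c. indicator A c * L)"
    by (rule integral_mono_AE[OF int int]) (auto simp: AE_measure_pmf_iff indicator_def b abs_mult)
  also have "\<dots> = measure_pmf.prob M A * L" by simp
  finally show ?thesis using pos unfolding cexp_def by (simp add: divide_le_eq abs_div mult.commute)
qed

locale qctx = gw G for G :: "('p::finite, 's, 'h, 'u, 'z, 'w) game" +
  fixes iota1 :: "'p \<Rightarrow> 'h \<Rightarrow> 'k" and iota :: "nat \<Rightarrow> 'p \<Rightarrow> 'k \<Rightarrow> 'z \<Rightarrow> 'k"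
    and i :: 'p and g :: "('p, 'h, 'z, 'u) profile" and \<tau> :: nat
    and F :: "('h, 'z, 'u) strat \<Rightarrow> nat \<Rightarrow> 'k \<Rightarrow> ('h, 'z) hist pmf"
    and Phi :: "('p, 'h, 'z, 'u) profile \<Rightarrow> nat \<Rightarrow> 'k \<Rightarrow> ('s \<times> ('p \<Rightarrow> ('h, 'z) hist)) pmf"
  assumes fm: "\<forall>j. j \<noteq> i \<longrightarrow> fully_mixed_strat G j (\<lambda>t. g t j)"
    and tau: "\<tau> \<in> {1..horizon G}"
    and usiP: "\<forall>g. behavioral_profile G g \<longrightarrow>
        (\<forall>t\<in>{1..horizon G}. \<forall>k.
          let M = run G g (t - 1); Ek = {c. compress iota1 iota i (cfg_hist c i) = k} in
          measure_pmf.prob M Ek > 0 \<longrightarrow>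
          (\<forall>x hs. cprob M {c. cfg_state c = x \<and> cfg_hist c = hs} Ek
                  = pmf (F (\<lambda>t. g t i) t k) (hs i)
                    * pmf (Phi (mask_profile i g) t k) (x, mask i hs)))"
begin

definition "prof gi = with_strat i gi g"
definition "mix gi gt = with_strat i (\<lambda>t. if t \<le> \<tau> then gi t else gt t) g"
definition "PhK k = Phi (mask_profile i g) \<tau> k"
definition "Bk k = {y \<in> set_pmf (PhK k). snd y i = undefined}"
definition "Srel c = (\<Sum>t\<in>{\<tau>+1..horizon G}. (snd (snd c) ! (t - 1 - \<tau>)) i)"
definition "Ssum c = (\<Sum>t\<in>{\<tau>+1..horizon G}. cfg_rew c t i)"
definition "Xi1 u x hs = measure_pmf.expectation (Pi_pmf (UNIV - {i}) undefined (\<lambda>j. g \<tau> j (hs j)))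
   (\<lambda>f. measure_pmf.expectation (noise G \<tau>) (\<lambda>w. snd (snd (dyn G \<tau> x (f(i := u)) w)) i))"
definition "W u h gi gt x hs = measure_pmf.expectation (Pi_pmf (UNIV - {i}) undefined (\<lambda>j. g \<tau> j (hs j)))
   (\<lambda>f. measure_pmf.expectation (noise G \<tau>) (\<lambda>w.
      measure_pmf.expectation (cont G (shift i h (mix gi gt)) \<tau> (horizon G - \<tau>) (relnext G i \<tau> x hs (f(i := u)) w)) Srel))"

lemma behav_strat_g: "j \<noteq> i \<Longrightarrow> behavioral_strat G j (\<lambda>t. g t j)"
  using fm unfolding fully_mixed_strat_def behavioral_strat_def by blast

lemma behav_with: "behavioral_strat G i gi \<Longrightarrow> behavioral_profile G (with_strat i gi g)"
  unfolding behavioral_profile_def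
proof
  fix j assume gi: "behavioral_strat G i gi"
  show "behavioral_strat G j (\<lambda>t. with_strat i gi g t j)"
  proof (cases "j = i")
    case True then show ?thesis using gi by (simp add: with_strat_def)
  next
    case False then show ?thesis using behav_strat_g[OF False] by (simp add: with_strat_def)
  qed
qed

lemma behav_prof: "behavioral_strat G i gi \<Longrightarrow> behavioral_profile G (prof gi)"
  unfolding prof_def by (rule behav_with)

lemma behav_mixstrat: "behavioral_strat G i gi \<Longrightarrow> behavioral_strat G i gt
   \<Longrightarrow> behavioral_strat G i (\<lambda>t. if t \<le> \<tau> then gi t else gt t)"
  unfolding behavioral_strat_def by auto

lemma behav_mix: "behavioral_strat G i gi \<Longrightarrow> behavioral_strat G i gt \<Longrightarrow> behavioral_profile G (mix gi gt)"
  unfolding mix_def by (intro behav_with behav_mixstrat)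

lemma mask_with: "mask_profile i (with_strat i gi g) = mask_profile i g"
  by (auto simp: mask_profile_def mask_def with_strat_def fun_eq_iff)

lemma run_mix: "run G (mix gi gt) (\<tau> - 1) = run G (prof gi) (\<tau> - 1)"
  by (rule run_cong) (auto simp: mix_def prof_def with_strat_def fun_eq_iff)

lemma Qfun_mix: "with_strat i (\<lambda>t. if t \<le> \<tau> then prof gi t i else gt t) (prof gi) = mix gi gt"
  by (auto simp: mix_def prof_def with_strat_def fun_eq_iff)

lemma den:
  assumes q: "behavioral_profile G q"
  shows "measure_pmf.prob (run G q (horizon G)) (ev_hu G \<tau> i h u)
     = pmf (q \<tau> i h) u * measure_pmf.prob (run G q (\<tau> - 1)) {c. cfg_hist c i = h}"
  unfolding prob_exp
  by (subst decomp[OF q tau]) (simp add: mult.left_commute)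

lemma Xi1_upd: "Xi1 u x (hs(i := v)) = Xi1 u x hs"
proof -
  have "Pi_pmf (UNIV - {i}) undefined (\<lambda>j. g \<tau> j ((hs(i := v)) j)) = Pi_pmf (UNIV - {i}) undefined (\<lambda>j. g \<tau> j (hs j))"
    by (rule Pi_pmf_cong) auto
  then show ?thesis unfolding Xi1_def by simp
qed

lemma W_upd: "W u h gi gt x (hs(i := v)) = W u h gi gt x hs"
proof -
  have "Pi_pmf (UNIV - {i}) undefined (\<lambda>j. g \<tau> j ((hs(i := v)) j)) = Pi_pmf (UNIV - {i}) undefined (\<lambda>j. g \<tau> j (hs j))"
    by (rule Pi_pmf_cong) auto
  then show ?thesis unfolding W_def by (simp add: relnext_upd)
qed

lemma cont_R_const:
  assumes "\<tau> \<le> length (snd (snd c'))"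
  shows "measure_pmf.expectation (cont G q n m c') (\<lambda>c. cfg_rew c \<tau> i) = cfg_rew c' \<tau> i"
proof -
  have "measure_pmf.expectation (cont G q n m c') (\<lambda>c. cfg_rew c \<tau> i)
      = measure_pmf.expectation (cont G q n m c') (\<lambda>c. cfg_rew c' \<tau> i)"
  proof (rule exp_cong)
    fix c assume "c \<in> set_pmf (cont G q n m c')"
    from cont_ext[OF this] obtain rs where "snd (snd c) = snd (snd c') @ rs" by blast
    then show "cfg_rew c \<tau> i = cfg_rew c' \<tau> i"
    proof -
      have "\<tau> - 1 < length (snd (snd c'))" using assms tau by auto
      then show ?thesis using \<open>snd (snd c) = snd (snd c') @ rs\<close> by (simp add: cfg_rew_def nth_append)
    qed
  qed
  then show ?thesis by simp
qed

lemma Ssum_Psi: "length rsp = \<tau> \<Longrightarrow> Ssum (Psi i h rsp c) = Srel c"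
  unfolding Ssum_def Srel_def
  by (rule sum.cong) (auto simp: Psi_def cfg_rew_def nth_append)

lemma nextc_rew:
  assumes "length (snd (snd c)) = \<tau> - 1"
  shows "cfg_rew (nextc G \<tau> c a w) \<tau> i = snd (snd (dyn G \<tau> (cfg_state c) a w)) i"
    and "length (snd (snd (nextc G \<tau> c a w))) = \<tau>"
  using assms tau
  by (cases c; cases "dyn G \<tau> (cfg_state c) a w"; auto simp: nextc_def cfg_rew_def cfg_state_def nth_append)+

lemma usiF:
  assumes q: "behavioral_profile G (prof gi)"
    and PEk: "measure_pmf.prob (run G (prof gi) (\<tau> - 1)) {c. compress iota1 iota i (cfg_hist c i) = k} > 0"
  shows "\<forall>x hs. cprob (run G (prof gi) (\<tau> - 1)) {c. cfg_state c = x \<and> cfg_hist c = hs}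
            {c. compress iota1 iota i (cfg_hist c i) = k}
          = pmf (F (\<lambda>t. prof gi t i) \<tau> k) (hs i) * pmf (PhK k) (x, mask i hs)"
proof -
  from usiP have "behavioral_profile G (prof gi) \<longrightarrow>
        (\<forall>t\<in>{1..horizon G}. \<forall>k.
          let M = run G (prof gi) (t - 1); Ek = {c. compress iota1 iota i (cfg_hist c i) = k} in
          measure_pmf.prob M Ek > 0 \<longrightarrow>
          (\<forall>x hs. cprob M {c. cfg_state c = x \<and> cfg_hist c = hs} Ek
                  = pmf (F (\<lambda>t. prof gi t i) t k) (hs i)
                    * pmf (Phi (mask_profile i (prof gi)) t k) (x, mask i hs)))" by (rule spec)
  from this q have "\<forall>t\<in>{1..horizon G}. \<forall>k.
          let M = run G (prof gi) (t - 1); Ek = {c. compress iota1 iota i (cfg_hist c i) = k} in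
          measure_pmf.prob M Ek > 0 \<longrightarrow>
          (\<forall>x hs. cprob M {c. cfg_state c = x \<and> cfg_hist c = hs} Ek
                  = pmf (F (\<lambda>t. prof gi t i) t k) (hs i)
                    * pmf (Phi (mask_profile i (prof gi)) t k) (x, mask i hs))" by (rule mp)
  from this tau have "\<forall>k.
          let M = run G (prof gi) (\<tau> - 1); Ek = {c. compress iota1 iota i (cfg_hist c i) = k} in
          measure_pmf.prob M Ek > 0 \<longrightarrow>
          (\<forall>x hs. cprob M {c. cfg_state c = x \<and> cfg_hist c = hs} Ek
                  = pmf (F (\<lambda>t. prof gi t i) \<tau> k) (hs i)
                    * pmf (Phi (mask_profile i (prof gi)) \<tau> k) (x, mask i hs))" by (rule bspec)
  then have "measure_pmf.prob (run G (prof gi) (\<tau> - 1)) {c. compress iota1 iota i (cfg_hist c i) = k} > 0 \<longrightarrow>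
          (\<forall>x hs. cprob (run G (prof gi) (\<tau> - 1)) {c. cfg_state c = x \<and> cfg_hist c = hs} {c. compress iota1 iota i (cfg_hist c i) = k}
                  = pmf (F (\<lambda>t. prof gi t i) \<tau> k) (hs i)
                    * pmf (Phi (mask_profile i (prof gi)) \<tau> k) (x, mask i hs))"
    unfolding Let_def by (rule spec)
  from this PEk show ?thesis by (simp add: PhK_def prof_def mask_with)
qed

lemma pos_split:
  assumes "(a::real) \<ge> 0" "b \<ge> 0" "a * b > 0" shows "a > 0" "b > 0"
  using assms by (auto simp: zero_less_mult_iff)

end


context qctx
begin

lemma Q_formula:
  assumes gi: "behavioral_strat G i gi"
    and pos: "measure_pmf.prob (run G (prof gi) (horizon G)) (ev_hu G \<tau> i h u) > 0"
  defines "k \<equiv> compress iota1 iota i h"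
  defines "Z \<equiv> \<Sum>y\<in>Bk k. pmf (PhK k) y"
  shows "Qfun G (prof gi) i \<tau> h u = (\<Sum>y\<in>Bk k. pmf (PhK k) y * Xi1 u (fst y) (snd y)) / Z
        + (SUP gt\<in>{gt. behavioral_strat G i gt}. (\<Sum>y\<in>Bk k. pmf (PhK k) y * W u h gi gt (fst y) (snd y)) / Z)"
proof -
  let ?T = "horizon G"
  let ?q = "prof gi"
  let ?M = "run G ?q (\<tau> - 1)"
  let ?ev = "ev_hu G \<tau> i h u"
  let ?Ek = "{c. compress iota1 iota i (cfg_hist c i) = k}"
  let ?Fh = "pmf (F (\<lambda>t. ?q t i) \<tau> k) h"
  let ?gu = "pmf (gi \<tau> h) u"
  let ?H = "{c. cfg_hist c i = h} :: ('p, 's, 'h, 'z) config set"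
  have q: "behavioral_profile G ?q" by (rule behav_prof[OF gi])
  have qi: "?q t i = gi t" for t by (simp add: prof_def with_strat_def)
  have qj: "j \<noteq> i \<Longrightarrow> ?q t j = g t j" for t j by (simp add: prof_def with_strat_def)
  have finM: "finite (set_pmf ?M)" using run_inv[OF q, of "\<tau> - 1"] tau by auto
  have invM: "\<And>c. c \<in> set_pmf ?M \<Longrightarrow> inv G (\<tau> - 1) c" using run_inv[OF q, of "\<tau> - 1"] tau by auto
  have den0: "measure_pmf.prob (run G ?q ?T) ?ev = ?gu * measure_pmf.prob ?M ?H"
    using den[OF q] qi by simp
  have gu: "?gu > 0" and ph: "measure_pmf.prob ?M ?H > 0"
    using pos_split[of ?gu "measure_pmf.prob ?M ?H"] pos den0 by auto
  have sub: "?H \<subseteq> ?Ek" by (auto simp: k_def)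
  have PEk: "measure_pmf.prob ?M ?Ek > 0"
    using ph measure_pmf.finite_measure_mono[OF sub, of ?M] by simp
  have uF: "\<forall>x hs. cprob ?M {c. cfg_state c = x \<and> cfg_hist c = hs} ?Ek
          = pmf (F (\<lambda>t. ?q t i) \<tau> k) (hs i) * pmf (PhK k) (x, mask i hs)"
    by (rule usiF[OF q PEk])
  have Ek: "?Ek = {c. compress iota1 iota i (cfg_hist c i) = compress iota1 iota i h}" by (simp add: k_def)
  have Bk: "Bk k = {y \<in> set_pmf (PhK k). snd y i = undefined}" by (simp add: Bk_def)
  note US = usi_sum[OF finM uF Ek ph, folded Bk]
  define P where "P = measure_pmf.prob ?M ?Ek"
  have Ppos: "P > 0" and Fpos: "?Fh > 0" and finB: "finite (Bk k)"
    using US(2-4) by (auto simp: P_def)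
  have phZ: "measure_pmf.prob ?M ?H = P * ?Fh * Z"
  proof -
    have "measure_pmf.prob ?M ?H = measure_pmf.expectation ?M (\<lambda>c. indicator ?H c * 1)" by (rule prob_exp)
    also have "\<dots> = P * ?Fh * (\<Sum>y\<in>Bk k. pmf (PhK k) y * 1)"
      unfolding P_def by (rule US(1)[where \<Xi>="\<lambda>_ _. 1"]) simp
    finally show ?thesis by (simp add: Z_def)
  qed
  have PF: "P * ?Fh > 0" using Ppos Fpos by simp
  have Zpos: "Z > 0" using ph phZ PF by (metis zero_less_mult_pos)
  have D: "measure_pmf.prob (run G ?q ?T) ?ev = ?gu * (P * ?Fh * Z)" using den0 phZ by simp
  have Dpos: "?gu * (P * ?Fh * Z) \<noteq> 0" using gu Ppos Fpos Zpos by simp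
  have N1: "measure_pmf.expectation (run G ?q ?T) (\<lambda>c. indicator ?ev c * cfg_rew c \<tau> i)
      = P * ?Fh * (\<Sum>y\<in>Bk k. pmf (PhK k) y * (?gu * Xi1 u (fst y) ((snd y)(i := h))))"
  proof -
    have Th1: "pmf (?q \<tau> i h) u * measure_pmf.expectation (Pi_pmf (UNIV-{i}) undefined (\<lambda>j. ?q \<tau> j (cfg_hist c j)))
       (\<lambda>f. measure_pmf.expectation (noise G \<tau>) (\<lambda>w. measure_pmf.expectation
          (cont G ?q \<tau> (?T - \<tau>) (nextc G \<tau> c (f(i:=u)) w)) (\<lambda>c. cfg_rew c \<tau> i)))
       = ?gu * Xi1 u (cfg_state c) (cfg_hist c)"
      if c: "c \<in> set_pmf ?M" "cfg_hist c i = h" for c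
    proof -
      have len: "length (snd (snd c)) = \<tau> - 1" using invM[OF c(1)] by (simp add: inv_def)
      have Pi: "Pi_pmf (UNIV-{i}) undefined (\<lambda>j. ?q \<tau> j (cfg_hist c j)) = Pi_pmf (UNIV-{i}) undefined (\<lambda>j. g \<tau> j (cfg_hist c j))"
        by (rule Pi_pmf_cong) (auto simp: qj)
      have inner: "measure_pmf.expectation (cont G ?q \<tau> (?T - \<tau>) (nextc G \<tau> c (f(i:=u)) w)) (\<lambda>c. cfg_rew c \<tau> i)
          = snd (snd (dyn G \<tau> (cfg_state c) (f(i:=u)) w)) i" for f w
        using cont_R_const[of "nextc G \<tau> c (f(i:=u)) w"] nextc_rew[OF len] by simp
      show ?thesis unfolding Xi1_def Pi inner qi by simp
    qed
    show ?thesis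
      unfolding P_def
      apply (subst decomp[OF q tau])
      apply (rule US(1)[where \<Xi>="\<lambda>x hs. ?gu * Xi1 u x hs"])
      apply (erule (1) Th1)
      done
  qed
  have C1: "cexp (run G ?q ?T) ?ev (\<lambda>c. cfg_rew c \<tau> i) = (\<Sum>y\<in>Bk k. pmf (PhK k) y * Xi1 u (fst y) (snd y)) / Z"
  proof -
    have "(\<Sum>y\<in>Bk k. pmf (PhK k) y * (?gu * Xi1 u (fst y) ((snd y)(i := h))))
        = ?gu * (\<Sum>y\<in>Bk k. pmf (PhK k) y * Xi1 u (fst y) (snd y))"
      by (simp add: sum_distrib_left Xi1_upd[of u _ "snd _" h, simplified] ac_simps)
    then show ?thesis unfolding cexp_def N1 D using Dpos by (simp add: field_simps)
  qed
  have C2: "cexp (run G (mix gi gt) ?T) ?ev Ssum = (\<Sum>y\<in>Bk k. pmf (PhK k) y * W u h gi gt (fst y) (snd y)) / Z"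
    if gt: "behavioral_strat G i gt" for gt
  proof -
    let ?m = "mix gi gt"
    have qm: "behavioral_profile G ?m" by (rule behav_mix[OF gi gt])
    have mi: "?m \<tau> i = gi \<tau>" by (simp add: mix_def with_strat_def)
    have mj: "j \<noteq> i \<Longrightarrow> ?m t j = g t j" for t j by (simp add: mix_def with_strat_def)
    have Th2: "pmf (?m \<tau> i h) u * measure_pmf.expectation (Pi_pmf (UNIV-{i}) undefined (\<lambda>j. ?m \<tau> j (cfg_hist c j)))
       (\<lambda>f. measure_pmf.expectation (noise G \<tau>) (\<lambda>w. measure_pmf.expectation
          (cont G ?m \<tau> (?T - \<tau>) (nextc G \<tau> c (f(i:=u)) w)) Ssum))
       = ?gu * W u h gi gt (cfg_state c) (cfg_hist c)"
      if c: "c \<in> set_pmf ?M" "cfg_hist c i = h" for c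
    proof -
      have len: "length (snd (snd c)) = \<tau> - 1" using invM[OF c(1)] by (simp add: inv_def)
      have Pi: "Pi_pmf (UNIV-{i}) undefined (\<lambda>j. ?m \<tau> j (cfg_hist c j)) = Pi_pmf (UNIV-{i}) undefined (\<lambda>j. g \<tau> j (cfg_hist c j))"
        by (rule Pi_pmf_cong) (auto simp: mj)
      have inner: "measure_pmf.expectation (cont G ?m \<tau> (?T - \<tau>) (nextc G \<tau> c a w)) Ssum
          = measure_pmf.expectation (cont G (shift i h ?m) \<tau> (?T - \<tau>) (relnext G i \<tau> (cfg_state c) (cfg_hist c) a w)) Srel" for a w
      proof -
        let ?rsp = "snd (snd c) @ [snd (snd (dyn G \<tau> (cfg_state c) a w))]"
        have lr: "length ?rsp = \<tau>" using len tau by simp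
        show ?thesis
          unfolding nextc_Psi[OF c(2)] cont_Psi integral_map_pmf Ssum_Psi[OF lr] ..
      qed
      show ?thesis unfolding W_def Pi inner mi by simp
    qed
    have N2: "measure_pmf.expectation (run G ?m ?T) (\<lambda>c. indicator ?ev c * Ssum c)
      = P * ?Fh * (\<Sum>y\<in>Bk k. pmf (PhK k) y * (?gu * W u h gi gt (fst y) ((snd y)(i := h))))"
      unfolding P_def
      apply (subst decomp[OF qm tau])
      apply (subst run_mix)
      apply (rule US(1)[where \<Xi>="\<lambda>x hs. ?gu * W u h gi gt x hs"])
      apply (erule (1) Th2)
      done
    have Dm: "measure_pmf.prob (run G ?m ?T) ?ev = ?gu * (P * ?Fh * Z)"
      using den[OF qm] mi run_mix phZ by simp
    have "(\<Sum>y\<in>Bk k. pmf (PhK k) y * (?gu * W u h gi gt (fst y) ((snd y)(i := h))))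
        = ?gu * (\<Sum>y\<in>Bk k. pmf (PhK k) y * W u h gi gt (fst y) (snd y))"
      by (simp add: sum_distrib_left W_upd[of u h gi gt _ "snd _" h, simplified] ac_simps)
    then show ?thesis unfolding cexp_def N2 Dm using Dpos by (simp add: field_simps)
  qed
  have Sfun: "(\<lambda>c. \<Sum>t\<in>{\<tau>+1..?T}. cfg_rew c t i) = Ssum" by (simp add: Ssum_def fun_eq_iff)
  show ?thesis
    unfolding Qfun_def Qfun_mix Sfun C1
    by (rule arg_cong[where f="\<lambda>x. _ + x"], rule SUP_cong) (auto simp: C2)
qed

lemma pos_den:
  assumes gi: "behavioral_strat G i gi"
    and pos: "measure_pmf.prob (run G (prof gi) (horizon G)) (ev_hu G \<tau> i h u) > 0"
  shows "pmf (gi \<tau> h) u > 0" and "measure_pmf.prob (run G (prof gi) (\<tau> - 1)) {c. cfg_hist c i = h} > 0"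
proof -
  have q: "behavioral_profile G (prof gi)" by (rule behav_prof[OF gi])
  have qi: "prof gi t i = gi t" for t by (simp add: prof_def with_strat_def)
  have "measure_pmf.prob (run G (prof gi) (horizon G)) (ev_hu G \<tau> i h u)
       = pmf (gi \<tau> h) u * measure_pmf.prob (run G (prof gi) (\<tau> - 1)) {c. cfg_hist c i = h}"
    using den[OF q] qi by simp
  then show "pmf (gi \<tau> h) u > 0" "measure_pmf.prob (run G (prof gi) (\<tau> - 1)) {c. cfg_hist c i = h} > 0"
    using pos_split[of "pmf (gi \<tau> h) u" "measure_pmf.prob (run G (prof gi) (\<tau> - 1)) {c. cfg_hist c i = h}"] pos
    by auto
qed

lemma hist_in:
  assumes gi: "behavioral_strat G i gi"
    and pos: "measure_pmf.prob (run G (prof gi) (horizon G)) (ev_hu G \<tau> i h u) > 0"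
  shows "h \<in> hist_set G \<tau> i"
proof -
  let ?M = "run G (prof gi) (\<tau> - 1)"
  have q: "behavioral_profile G (prof gi)" by (rule behav_prof[OF gi])
  have ph: "measure_pmf.prob ?M {c. cfg_hist c i = h} > 0" by (rule pos_den(2)[OF gi pos])
  have "{c. cfg_hist c i = h} \<inter> set_pmf ?M \<noteq> {}"
  proof
    assume "{c. cfg_hist c i = h} \<inter> set_pmf ?M = {}"
    then have "measure_pmf.prob ?M {c. cfg_hist c i = h} = 0"
      using measure_Int_set_pmf[of ?M "{c. cfg_hist c i = h}"] by simp
    with ph show False by simp
  qed
  then obtain c where c: "c \<in> set_pmf ?M" "cfg_hist c i = h" by blast
  have "inv G (\<tau> - 1) c" using run_inv[OF q, of "\<tau> - 1"] tau c(1) by auto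
  then have "cfg_hist c i \<in> hist_set G (Suc (\<tau> - 1)) i" by (simp add: inv_def)
  then show ?thesis using c(2) tau by simp
qed

definition "transfer h h' gt = (\<lambda>t hh. if \<tau> - 1 \<le> length (snd hh) \<and> hist_at \<tau> hh = h'
    then gt t (fst h, snd h @ drop (\<tau> - 1) (snd hh)) else gt t hh)"

lemma transfer_hist:
  assumes h: "h \<in> hist_set G \<tau> i" and hh: "hh \<in> hist_set G t i" and le: "\<tau> - 1 \<le> length (snd hh)"
  shows "(fst h, snd h @ drop (\<tau> - 1) (snd hh)) \<in> hist_set G t i"
proof -
  obtain a zsh where ha: "h = (a, zsh)" by (cases h)
  obtain b zs where hb: "hh = (b, zs)" by (cases hh)
  have A: "a \<in> H1s G i" "length zsh = \<tau> - 1" "\<forall>s<\<tau> - 1. zsh ! s \<in> Zs G (Suc s) i"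
    using h ha by (auto simp: hist_set_def)
  have B: "length zs = t - 1" "\<forall>s<t - 1. zs ! s \<in> Zs G (Suc s) i"
    using hh hb by (auto simp: hist_set_def)
  have L: "\<tau> - 1 \<le> length zs" using le hb by simp
  have "\<forall>s<t - 1. (zsh @ drop (\<tau> - 1) zs) ! s \<in> Zs G (Suc s) i"
  proof (intro allI impI)
    fix s assume s: "s < t - 1"
    show "(zsh @ drop (\<tau> - 1) zs) ! s \<in> Zs G (Suc s) i"
    proof (cases "s < \<tau> - 1")
      case True then show ?thesis using A by (simp add: nth_append)
    next
      case False
      then have "(zsh @ drop (\<tau> - 1) zs) ! s = zs ! s" using A L by (simp add: nth_append)
      then show ?thesis using B s by simp
    qed
  qed
  then show ?thesis using A B L ha hb by (simp add: hist_set_def)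
qed

lemma transfer_behav:
  assumes h: "h \<in> hist_set G \<tau> i" and gt: "behavioral_strat G i gt"
  shows "behavioral_strat G i (transfer h h' gt)"
  unfolding behavioral_strat_def
proof (intro ballI)
  fix t hh assume t: "t \<in> {1..horizon G}" and hh: "hh \<in> hist_set G t i"
  show "set_pmf (transfer h h' gt t hh) \<subseteq> Us G t i"
  proof (cases "\<tau> - 1 \<le> length (snd hh) \<and> hist_at \<tau> hh = h'")
    case True
    then have "transfer h h' gt t hh = gt t (fst h, snd h @ drop (\<tau> - 1) (snd hh))" by (simp add: transfer_def)
    moreover have "(fst h, snd h @ drop (\<tau> - 1) (snd hh)) \<in> hist_set G t i"
      using transfer_hist[OF h hh] True by simp
    ultimately show ?thesis using gt t unfolding behavioral_strat_def by simp
  next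
    case False
    then have "transfer h h' gt t hh = gt t hh" unfolding transfer_def by (simp only: if_False)
    moreover have "set_pmf (gt t hh) \<subseteq> Us G t i" using gt t hh unfolding behavioral_strat_def by blast
    ultimately show ?thesis by simp
  qed
qed

lemma W_transfer:
  assumes h: "h \<in> hist_set G \<tau> i" and h': "h' \<in> hist_set G \<tau> i"
  shows "W u h' gi' (transfer h h' gt) x m = W u h gi gt x m"
proof -
  have lh: "length (snd h) = \<tau> - 1" "length (snd h') = \<tau> - 1"
    using hist_set_len[OF h] hist_set_len[OF h'] by auto
  have eq: "shift i h' (mix gi' (transfer h h' gt)) t = shift i h (mix gi gt) t" if t: "t > \<tau>" for t
  proof -
    have "transfer h h' gt t (fst h', snd h' @ zs) = gt t (fst h, snd h @ zs)" for zs
      using lh by (simp add: transfer_def hist_at_def)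
    then show ?thesis using t by (auto simp: shift_def mix_def with_strat_def fun_eq_iff)
  qed
  have "cont G (shift i h' (mix gi' (transfer h h' gt))) \<tau> n c = cont G (shift i h (mix gi gt)) \<tau> n c" for n c
    by (rule cont_cong) (rule eq)
  then show ?thesis unfolding W_def by simp
qed

lemma Q_eq:
  assumes gi: "behavioral_strat G i gi"
    and pos: "measure_pmf.prob (run G (prof gi) (horizon G)) (ev_hu G \<tau> i h u) > 0"
    and gi': "behavioral_strat G i gi'"
    and pos': "measure_pmf.prob (run G (prof gi') (horizon G)) (ev_hu G \<tau> i h' u) > 0"
    and k: "compress iota1 iota i h' = compress iota1 iota i h"
  shows "Qfun G (prof gi') i \<tau> h' u = Qfun G (prof gi) i \<tau> h u"
proof -
  define k where "k = compress iota1 iota i h"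
  define Z where "Z = (\<Sum>y\<in>Bk k. pmf (PhK k) y)"
  have hh: "h \<in> hist_set G \<tau> i" by (rule hist_in[OF gi pos])
  have hh': "h' \<in> hist_set G \<tau> i" by (rule hist_in[OF gi' pos'])
  let ?X = "\<lambda>h gi gt. (\<Sum>y\<in>Bk k. pmf (PhK k) y * W u h gi gt (fst y) (snd y)) / Z"
  have img: "(?X h' gi') ` {gt. behavioral_strat G i gt} = (?X h gi) ` {gt. behavioral_strat G i gt}"
  proof (intro equalityI subsetI)
    fix v assume "v \<in> (?X h' gi') ` {gt. behavioral_strat G i gt}"
    then obtain gt where gt: "behavioral_strat G i gt" "v = ?X h' gi' gt" by blast
    have "v = ?X h gi (transfer h' h gt)" using gt(2) W_transfer[OF hh' hh, where gi'=gi and gi=gi'] by simp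
    moreover have "behavioral_strat G i (transfer h' h gt)" by (rule transfer_behav[OF hh' gt(1)])
    ultimately show "v \<in> (?X h gi) ` {gt. behavioral_strat G i gt}" by blast
  next
    fix v assume "v \<in> (?X h gi) ` {gt. behavioral_strat G i gt}"
    then obtain gt where gt: "behavioral_strat G i gt" "v = ?X h gi gt" by blast
    have "v = ?X h' gi' (transfer h h' gt)" using gt(2) W_transfer[OF hh hh', where gi'=gi' and gi=gi] by simp
    moreover have "behavioral_strat G i (transfer h h' gt)" by (rule transfer_behav[OF hh gt(1)])
    ultimately show "v \<in> (?X h' gi') ` {gt. behavioral_strat G i gt}" by blast
  qed
  show ?thesis
    unfolding Q_formula[OF gi pos] Q_formula[OF gi' pos'] k
    using img by (simp add: k_def Z_def)
qed

lemma Q_bound: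
  assumes gi: "behavioral_strat G i gi"
    and pos: "measure_pmf.prob (run G (prof gi) (horizon G)) (ev_hu G \<tau> i h u) > 0"
  shows "Qfun G (prof gi) i \<tau> h u \<in> {- real (horizon G) .. real (horizon G)}"
proof -
  let ?T = "horizon G"
  let ?ev = "ev_hu G \<tau> i h u"
  let ?L = "real (?T - \<tau>)"
  have q: "behavioral_profile G (prof gi)" by (rule behav_prof[OF gi])
  have rb: "\<bar>cfg_rew c t i\<bar> \<le> 1" if "inv G ?T c" "1 \<le> t" "t \<le> ?T" for c t
  proof -
    have "snd (snd c) ! (t - 1) \<in> set (snd (snd c))" using that by (simp add: inv_def)
    moreover have "\<forall>r\<in>set (snd (snd c)). \<forall>j. r j \<in> {-1..1}" using that(1) by (simp add: inv_def)
    ultimately have "(snd (snd c) ! (t - 1)) i \<in> {-1..1}" by blast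
    then show ?thesis unfolding cfg_rew_def by auto
  qed
  have C1: "\<bar>cexp (run G (prof gi) ?T) ?ev (\<lambda>c. cfg_rew c \<tau> i)\<bar> \<le> 1"
    by (rule cexp_bound[OF _ _ pos]) (use run_inv[OF q, of ?T] tau rb in auto)
  have C2: "\<bar>cexp (run G (mix gi gt) ?T) ?ev Ssum\<bar> \<le> ?L" if gt: "behavioral_strat G i gt" for gt
  proof -
    have qm: "behavioral_profile G (mix gi gt)" by (rule behav_mix[OF gi gt])
    have mi: "mix gi gt \<tau> i = gi \<tau>" by (simp add: mix_def with_strat_def)
    have qi: "prof gi \<tau> i = gi \<tau>" by (simp add: prof_def with_strat_def)
    have pm: "measure_pmf.prob (run G (mix gi gt) ?T) ?ev = measure_pmf.prob (run G (prof gi) ?T) ?ev"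
      using den[OF qm] den[OF q] mi qi run_mix by simp
    have Sb: "\<bar>Ssum c\<bar> \<le> ?L" if c: "inv G ?T c" for c
    proof -
      have "\<bar>Ssum c\<bar> \<le> (\<Sum>t\<in>{\<tau>+1..?T}. \<bar>cfg_rew c t i\<bar>)" unfolding Ssum_def by (rule sum_abs)
      also have "\<dots> \<le> (\<Sum>t\<in>{\<tau>+1..?T}. 1)" by (rule sum_mono) (use rb[OF c] tau in auto)
      also have "\<dots> = ?L" by simp
      finally show ?thesis .
    qed
    show ?thesis
      by (rule cexp_bound[OF _ _ pos[folded pm]]) (use run_inv[OF qm, of ?T] Sb in auto)
  qed
  let ?S = "SUP gt\<in>{gt. behavioral_strat G i gt}. cexp (run G (mix gi gt) ?T) ?ev Ssum"
  have ne: "{gt. behavioral_strat G i gt} \<noteq> {}" using gi by blast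
  have up: "?S \<le> ?L" by (rule cSUP_least[OF ne]) (use C2 abs_le_D1 in blast)
  have bdd: "bdd_above ((\<lambda>gt. cexp (run G (mix gi gt) ?T) ?ev Ssum) ` {gt. behavioral_strat G i gt})"
    by (rule bdd_aboveI2[where M="?L"]) (use C2 abs_le_D1 in blast)
  have "- ?L \<le> cexp (run G (mix gi gi) ?T) ?ev Ssum" using C2[OF gi] by simp
  also have "\<dots> \<le> ?S" by (rule cSUP_upper[OF _ bdd]) (use gi in simp)
  finally have lo: "- ?L \<le> ?S" .
  have Sfun: "(\<lambda>c. \<Sum>t\<in>{\<tau>+1..?T}. cfg_rew c t i) = Ssum" by (simp add: Ssum_def fun_eq_iff)
  have Q: "Qfun G (prof gi) i \<tau> h u = cexp (run G (prof gi) ?T) ?ev (\<lambda>c. cfg_rew c \<tau> i) + ?S"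
    unfolding Qfun_def Qfun_mix Sfun ..
  have "1 + ?L \<le> real ?T" using tau by auto
  then show ?thesis unfolding Q using C1 up lo by auto
qed

end


theorem lemma10:
  fixes G :: "('p::finite, 's, 'h, 'u, 'z, 'w) game"
    and iota1 :: "'p \<Rightarrow> 'h \<Rightarrow> 'k"
    and iota :: "nat \<Rightarrow> 'p \<Rightarrow> 'k \<Rightarrow> 'z \<Rightarrow> 'k"
    and Ks :: "nat \<Rightarrow> 'p \<Rightarrow> 'k set"
    and i :: 'p
    and g :: "('p, 'h, 'z, 'u) profile"
    and \<tau> :: nat
  assumes "game_wf G"
    and "compression_wf G iota1 iota Ks"
    and "usi G iota1 iota i"
    and "\<forall>j. j \<noteq> i \<longrightarrow> fully_mixed_strat G j (\<lambda>t. g t j)"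
    and "\<tau> \<in> {1..horizon G}"
  shows "\<exists>Qh :: 'k \<Rightarrow> 'u \<Rightarrow> real.
           (\<forall>k\<in>Ks \<tau> i. \<forall>u\<in>Us G \<tau> i. Qh k u \<in> {- real (horizon G) .. real (horizon G)}) \<and>
           (\<forall>gi h u. behavioral_strat G i gi \<longrightarrow>
              measure_pmf.prob (run G (with_strat i gi g) (horizon G)) (ev_hu G \<tau> i h u) > 0 \<longrightarrow>
              Qfun G (with_strat i gi g) i \<tau> h u = Qh (compress iota1 iota i h) u)"
proof -
  from assms(3) obtain F Phi where FP: "\<forall>g. behavioral_profile G g \<longrightarrow>
        (\<forall>t\<in>{1..horizon G}. \<forall>k.
          let M = run G g (t - 1); Ek = {c. compress iota1 iota i (cfg_hist c i) = k} in
          measure_pmf.prob M Ek > 0 \<longrightarrow>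
          (\<forall>x hs. cprob M {c. cfg_state c = x \<and> cfg_hist c = hs} Ek
                  = pmf (F (\<lambda>t. g t i) t k) (hs i)
                    * pmf (Phi (mask_profile i g) t k) (x, mask i hs)))"
    unfolding usi_def by blast
  interpret Q: qctx G iota1 iota i g \<tau> F Phi
    by (intro qctx.intro gw.intro qctx_axioms.intro assms(1) assms(4) assms(5) FP)
  define Adm where "Adm k u p \<longleftrightarrow> behavioral_strat G i (fst p) \<and>
      measure_pmf.prob (run G (with_strat i (fst p) g) (horizon G)) (ev_hu G \<tau> i (snd p) u) > 0
      \<and> compress iota1 iota i (snd p) = k" for k u p
  define Qh where "Qh k u = (if \<exists>p. Adm k u p then Qfun G (with_strat i (fst (SOME p. Adm k u p)) g) i \<tau> (snd (SOME p. Adm k u p)) u else 0)" for k u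
  have pr: "Q.prof gi = with_strat i gi g" for gi by (simp add: Q.prof_def)
  have bnd: "Qh k u \<in> {- real (horizon G) .. real (horizon G)}" for k u
  proof (cases "\<exists>p. Adm k u p")
    case True
    define p0 where "p0 = (SOME p. Adm k u p)"
    have A: "Adm k u p0" unfolding p0_def using True by (rule someI_ex)
    have A1: "behavioral_strat G i (fst p0)" and A2: "measure_pmf.prob (run G (Q.prof (fst p0)) (horizon G)) (ev_hu G \<tau> i (snd p0) u) > 0"
      using A by (simp_all add: Adm_def pr)
    have "Qh k u = Qfun G (Q.prof (fst p0)) i \<tau> (snd p0) u" using True by (simp add: Qh_def p0_def pr)
    then show ?thesis using Q.Q_bound[OF A1 A2] by simp
  next
    case False then show ?thesis by (simp add: Qh_def)
  qed
  have eq: "Qfun G (with_strat i gi g) i \<tau> h u = Qh (compress iota1 iota i h) u"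
    if gi: "behavioral_strat G i gi" and pos: "measure_pmf.prob (run G (with_strat i gi g) (horizon G)) (ev_hu G \<tau> i h u) > 0"
    for gi h u
  proof -
    let ?k = "compress iota1 iota i h"
    have ex: "\<exists>p. Adm ?k u p" using gi pos by (intro exI[of _ "(gi, h)"]) (simp add: Adm_def)
    define p0 where "p0 = (SOME p. Adm ?k u p)"
    have A: "Adm ?k u p0" unfolding p0_def using ex by (rule someI_ex)
    have A1: "behavioral_strat G i (fst p0)" and A2: "measure_pmf.prob (run G (Q.prof (fst p0)) (horizon G)) (ev_hu G \<tau> i (snd p0) u) > 0"
      and A3: "compress iota1 iota i (snd p0) = ?k"
      using A by (simp_all add: Adm_def pr)
    have pos': "measure_pmf.prob (run G (Q.prof gi) (horizon G)) (ev_hu G \<tau> i h u) > 0" using pos by (simp add: pr)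
    have "Qfun G (Q.prof (fst p0)) i \<tau> (snd p0) u = Qfun G (Q.prof gi) i \<tau> h u"
      by (rule Q.Q_eq[OF gi pos' A1 A2 A3])
    moreover have "Qh ?k u = Qfun G (Q.prof (fst p0)) i \<tau> (snd p0) u" using ex by (simp add: Qh_def p0_def pr)
    ultimately show ?thesis by (simp add: pr)
  qed
  show ?thesis
    by (rule exI[of _ Qh]) (use bnd eq in blast)
qed

end
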